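(* Let $0<\varepsilon\le1$ and $0<\alpha<1/2$ be constants, let $\bar s$ be an integer with $|\bar s|\le(1-\varepsilon)n$, and let $n'$ be a number with $n^{1/2+\alpha}<n'<n$. Assume that $\beta\le n^{-24}$ and that $V$ is a multiset in $\mathbb R^2$ of $n$ elements such that no $n-n'$ of its elements are all $\beta n^6$-close to a common point. Then $\rho^\ast_\beta(V)=O(\sqrt n/n')$.
   Context: For a multiset $V=\{v_1,\dots,v_n\}\subset\mathbb R^2$ and $\beta>0$, $\rho^\ast_\beta(V)=\sup_{v\in\mathbb R^2}\mathbb P_{\mathbf x}(v_1x_1+\dots+v_nx_n\in B(v,\beta))$, where $\mathbf x=(x_1,\dots,x_n)$ is uniform over all vectors in $\{-1,1\}^n$ with coordinate sum $\bar s$ and $B(v,\beta)$ is the closed disk of radius $\beta$ centered at $v$. A point $v$ is $\delta$-close to a point $q$ if $\|v-q\|\le\delta$. *)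

theory Defs
  imports "HOL-Analysis.Analysis"
begin

definition sign_vecs :: "nat \<Rightarrow> int \<Rightarrow> (nat \<Rightarrow> int) set" where
  "sign_vecs n s = {x \<in> PiE {..<n} (\<lambda>_. {-1, 1}). (\<Sum>i<n. x i) = s}"

definition small_ball_prob ::
  "nat \<Rightarrow> (nat \<Rightarrow> real^2) \<Rightarrow> int \<Rightarrow> real \<Rightarrow> real^2 \<Rightarrow> real" where
  "small_ball_prob n v s \<beta> c =
     real (card {x \<in> sign_vecs n s. (\<Sum>i<n. of_int (x i) *\<^sub>R v i) \<in> cball c \<beta>})
     / real (card (sign_vecs n s))"

text \<open>rho^*_beta(V) for the multiset V = {v 0, ..., v (n-1)}.\<close>
definition rho_star :: "nat \<Rightarrow> (nat \<Rightarrow> real^2) \<Rightarrow> int \<Rightarrow> real \<Rightarrow> real" where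
  "rho_star n v s \<beta> = (SUP c. small_ball_prob n v s \<beta> c)"

end

theory Submission
  imports Defs
begin

lemma LYM:
  assumes "finite X" "F \<subseteq> Pow X" "\<forall>A\<in>F. \<forall>B\<in>F. A \<subseteq> B \<longrightarrow> A = B"
  shows "(\<Sum>A\<in>F. 1 / real (card X choose card A)) \<le> 1"
  using assms
proof (induction "card X" arbitrary: X F)
  case 0
  then have "X = {}" by auto
  then have "F \<subseteq> {{}}" using 0 by auto
  then show ?case
    by (cases "F = {}") (auto dest: subset_singletonD)
next
  case (Suc m)
  note IH = Suc.hyps(1)
  have finF: "finite F" using Suc.prems(1,2) by (meson finite_Pow_iff rev_finite_subset)
  show ?case
  proof (cases "X \<in> F")
    case True
    have "A = X" if "A \<in> F" for A proof -
      have "A \<subseteq> X" using that Suc.prems(2) by blast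
      then show ?thesis using Suc.prems(3) that True by blast
    qed
    then have "F = {X}" using True by blast
    then show ?thesis by simp
  next
    case False
    have cardA: "card A < Suc m" if "A \<in> F" for A
    proof -
      have "A \<subseteq> X" "A \<noteq> X" using that Suc.prems(2) False by blast+
      then show ?thesis using Suc.hyps(2) Suc.prems(1) by (metis psubsetI psubset_card_mono)
    qed
    have step: "(\<Sum>A\<in>{A\<in>F. x \<notin> A}. 1 / real (m choose card A)) \<le> 1" if "x \<in> X" for x
    proof -
      have "card (X - {x}) = m" using Suc.hyps(2) that Suc.prems(1) by simp
      moreover have "{A\<in>F. x \<notin> A} \<subseteq> Pow (X - {x})" using Suc.prems(2) by blast
      ultimately show ?thesis using IH[of "X - {x}" "{A\<in>F. x \<notin> A}"] Suc.prems(1,3) by simp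
    qed
    have "(\<Sum>x\<in>X. (\<Sum>A\<in>{A\<in>F. x \<notin> A}. 1 / real (m choose card A))) \<le> (\<Sum>x\<in>X. 1)"
      by (rule sum_mono) (use step in auto)
    also have "\<dots> = Suc m" using Suc.hyps(2) by simp
    finally have le: "(\<Sum>x\<in>X. (\<Sum>A\<in>{A\<in>F. x \<notin> A}. 1 / real (m choose card A))) \<le> Suc m" .
    have "(\<Sum>x\<in>X. (\<Sum>A\<in>{A\<in>F. x \<notin> A}. 1 / real (m choose card A)))
        = (\<Sum>x\<in>X. (\<Sum>A\<in>F. if x \<notin> A then 1 / real (m choose card A) else 0))"
      by (rule sum.cong[OF refl]) (simp add: sum.inter_filter finF)
    also have "\<dots> = (\<Sum>A\<in>F. (\<Sum>x\<in>X. if x \<notin> A then 1 / real (m choose card A) else 0))"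
      by (rule sum.swap)
    also have "\<dots> = (\<Sum>A\<in>F. real (card (X - A)) / real (m choose card A))"
    proof (intro sum.cong refl)
      fix A assume "A \<in> F"
      have "(\<Sum>x\<in>X. if x \<notin> A then 1 / real (m choose card A) else 0)
           = (\<Sum>x\<in>{x\<in>X. x \<notin> A}. 1 / real (m choose card A))"
        by (rule sum.inter_filter[OF Suc.prems(1), symmetric])
      also have "{x\<in>X. x \<notin> A} = X - A" by auto
      finally show "(\<Sum>x\<in>X. if x \<notin> A then 1 / real (m choose card A) else 0) = real (card (X - A)) / real (m choose card A)"
        by simp
    qed
    also have "\<dots> = (\<Sum>A\<in>F. real (Suc m) / real (Suc m choose card A))"
    proof (intro sum.cong refl)
      fix A assume AF: "A \<in> F"
      have AX: "A \<subseteq> X" using AF Suc.prems(2) by blast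
      have c: "card (X - A) = Suc m - card A" using AX Suc.hyps(2) Suc.prems(1)
        by (simp add: card_Diff_subset finite_subset)
      have k: "card A < Suc m" using cardA AF by auto
      have e: "(Suc m - card A) * (Suc m choose card A) = Suc m * (m choose card A)"
        using binomial_absorb_comp[of "Suc m" "card A"] by simp
      have p1: "(m choose card A) > 0" using k by simp
      have p2: "(Suc m choose card A) > 0" using k by simp
      show "real (card (X - A)) / real (m choose card A) = real (Suc m) / real (Suc m choose card A)"
        unfolding c
      proof (subst frac_eq_eq)
        show "real (m choose card A) \<noteq> 0" using p1 by simp
        show "real (Suc m choose card A) \<noteq> 0" using p2 by simp
        show "real (Suc m - card A) * real (Suc m choose card A) = real (Suc m) * real (m choose card A)"
          using e by (metis of_nat_mult)
      qed
    qed
    also have "\<dots> = real (Suc m) * (\<Sum>A\<in>F. 1 / real (card X choose card A))"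
      by (simp add: sum_distrib_left Suc.hyps(2)[symmetric])
    finally have "real (Suc m) * (\<Sum>A\<in>F. 1 / real (card X choose card A)) \<le> real (Suc m)" using le by simp
    then show ?thesis by simp
  qed
qed


lemma sperner:
  assumes "finite X" "F \<subseteq> Pow X" "\<forall>A\<in>F. \<forall>B\<in>F. A \<subseteq> B \<longrightarrow> A = B"
  shows "card F \<le> card X choose (card X div 2)"
proof -
  have finF: "finite F" using assms by (meson finite_Pow_iff rev_finite_subset)
  have pos: "(card X choose (card X div 2)) > 0" by simp
  have "real (card F) / real (card X choose (card X div 2)) = (\<Sum>A\<in>F. 1 / real (card X choose (card X div 2)))"
    by simp
  also have "\<dots> \<le> (\<Sum>A\<in>F. 1 / real (card X choose card A))"
  proof (rule sum_mono)
    fix A assume "A \<in> F"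
    then have "card A \<le> card X" using assms by (meson PowD card_mono subsetD)
    then have "(card X choose card A) > 0" by simp
    then show "1 / real (card X choose (card X div 2)) \<le> 1 / real (card X choose card A)"
      using binomial_maximum[of "card X" "card A"]
      by (intro divide_left_mono) auto
  qed
  also have "\<dots> \<le> 1" by (rule LYM[OF assms])
  finally show ?thesis using pos by (simp add: divide_le_eq)
qed

lemma central_binom_rec: "((2*Suc r) choose Suc r) * (r+1) = ((2*r) choose r) * (2*(2*r+1))"
proof -
  have a: "Suc r * (Suc (2*r+1) choose Suc r) = Suc (2*r+1) * ((2*r+1) choose r)"
    by (rule Suc_times_binomial)
  have b: "(2*r+1 - r) * ((2*r+1) choose r) = (2*r+1) * ((2*r+1-1) choose r)"
    by (rule binomial_absorb_comp)
  have a': "(r+1) * ((2*Suc r) choose Suc r) = (r+1) * (2 * ((2*r+1) choose r))"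
    using a by (simp add: algebra_simps)
  have b': "(r+1) * ((2*r+1) choose r) = (2*r+1) * ((2*r) choose r)"
    using b by (simp add: Suc_diff_le)
  have c2: "((2*Suc r) choose Suc r) = 2 * ((2*r+1) choose r)"
    using a' by (simp only: mult_left_cancel)
  show ?thesis using c2 b' by (metis mult.assoc mult.commute)
qed

lemma central_binom_even: "(real ((2*r) choose r) / 4^r)^2 * (2*r+1) \<le> 1"
proof (induction r)
  case 0 then show ?case by simp
next
  case (Suc r)
  define t where "t = real ((2*r) choose r) / 4^r"
  have t: "t^2 * (2*real r+1) \<le> 1" using Suc t_def by (simp add: add.commute)
  have e: "real ((2*Suc r) choose Suc r) * (r+1) = real ((2*r) choose r) * (2*(2*r+1))"
    using central_binom_rec[of r] by (metis of_nat_mult of_nat_add of_nat_1 of_nat_numeral)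
  have e2: "real ((2*Suc r) choose Suc r) / 4^Suc r = t * ((2*r+1)/(2*r+2))"
  proof -
    have "real ((2*Suc r) choose Suc r) = real ((2*r) choose r) * (2*(2*r+1)) / (r+1)"
      using e by (simp add: eq_divide_eq)
    then show ?thesis unfolding t_def by (simp add: divide_simps) (simp add: algebra_simps)
  qed
  have f0: "(2*real r+1)*(2*real r+3) \<le> (2*real r+2)^2" by (simp add: power2_eq_square algebra_simps)
  have f: "(2*real r+1)*(2*real r+3)/(2*real r+2)^2 \<le> 1" using f0 by (simp add: divide_le_eq)
  have "(real ((2*Suc r) choose Suc r) / 4^Suc r)^2 * (2*Suc r+1) = (t^2 * (2*real r+1)) * ((2*real r+1)*(2*real r+3)/(2*real r+2)^2)"
    unfolding e2 power2_eq_square by (simp add: field_simps)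
  also have "\<dots> \<le> 1 * 1"
    by (rule mult_mono[OF t f]) simp_all
  finally show ?case by simp
qed

lemma central_binom: "(real (m choose (m div 2)) / 2^m)^2 * (m+1) \<le> 1"
proof (cases "even m")
  case True
  then obtain r where m: "m = 2*r" by auto
  have "(2::real)^(2*r) = 4^r" by (induction r) simp_all
  then have "(2::real)^m = 4^r" unfolding m .
  then show ?thesis using central_binom_even[of r] m by (simp add: add.commute)
next
  case False
  then obtain r where m: "m = 2*r+1" using oddE by blast
  have d: "m div 2 = r" using m by simp
  have c2: "((2*Suc r) choose Suc r) = 2 * ((2*r+1) choose r)"
  proof -
    have a: "Suc r * (Suc (2*r+1) choose Suc r) = Suc (2*r+1) * ((2*r+1) choose r)"
      by (rule Suc_times_binomial)
    have a': "(r+1) * ((2*Suc r) choose Suc r) = (r+1) * (2 * ((2*r+1) choose r))"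
      using a by (simp add: algebra_simps)
    show ?thesis using a' by (simp only: mult_left_cancel)
  qed
  have e: "real (m choose (m div 2)) / 2^m = real ((2*Suc r) choose Suc r) / 4^Suc r"
  proof -
    have p: "(2::real)^(2*r) = 4^r" by (induction r) simp_all
    have p2: "((2::real)^r)^2 = 4^r" by (induction r) (simp_all add: power_mult_distrib)
    have "(2::real)^m = 2 * 4^r" unfolding m using p p2 by simp
    then show ?thesis unfolding d c2 by (simp add: field_simps m)
  qed
  have "(real (m choose (m div 2)) / 2^m)^2 * (m+1) \<le> (real ((2*Suc r) choose Suc r) / 4^Suc r)^2 * (2*Suc r+1)"
    unfolding e by (rule mult_left_mono) (use m in auto)
  also have "\<dots> \<le> 1" by (rule central_binom_even)
  finally show ?thesis .
qed

definition pairs_ok :: "nat \<Rightarrow> (nat \<times> nat) set \<Rightarrow> bool" where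
  "pairs_ok n P \<longleftrightarrow> finite P \<and> (\<forall>p\<in>P. fst p < n \<and> snd p < n \<and> fst p \<noteq> snd p) \<and>
     (\<forall>p\<in>P. \<forall>p'\<in>P. p \<noteq> p' \<longrightarrow> fst p \<noteq> fst p' \<and> fst p \<noteq> snd p' \<and> snd p \<noteq> snd p')"

definition ppos :: "(nat \<times> nat) set \<Rightarrow> nat set" where
  "ppos T = fst ` T \<union> snd ` T"

definition disc :: "(nat \<times> nat) set \<Rightarrow> (nat \<Rightarrow> int) \<Rightarrow> (nat \<times> nat) set" where
  "disc P x = {p\<in>P. x (fst p) \<noteq> x (snd p)}"

definition Ssum :: "nat \<Rightarrow> (nat \<Rightarrow> real) \<Rightarrow> (nat \<Rightarrow> int) \<Rightarrow> real" where
  "Ssum n w x = (\<Sum>i<n. real_of_int (x i) * w i)"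

lemma po_fin: "pairs_ok n P \<Longrightarrow> finite P" by (simp add: pairs_ok_def)
lemma po_lt1: "pairs_ok n P \<Longrightarrow> p \<in> P \<Longrightarrow> fst p < n" by (simp add: pairs_ok_def)
lemma po_lt2: "pairs_ok n P \<Longrightarrow> p \<in> P \<Longrightarrow> snd p < n" by (simp add: pairs_ok_def)
lemma po_ne: "pairs_ok n P \<Longrightarrow> p \<in> P \<Longrightarrow> fst p \<noteq> snd p" by (simp add: pairs_ok_def)
lemma po_ff: "pairs_ok n P \<Longrightarrow> p \<in> P \<Longrightarrow> p' \<in> P \<Longrightarrow> fst p = fst p' \<Longrightarrow> p = p'"
  unfolding pairs_ok_def by blast
lemma po_ss: "pairs_ok n P \<Longrightarrow> p \<in> P \<Longrightarrow> p' \<in> P \<Longrightarrow> snd p = snd p' \<Longrightarrow> p = p'"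
  unfolding pairs_ok_def by blast
lemma po_fs: "pairs_ok n P \<Longrightarrow> p \<in> P \<Longrightarrow> p' \<in> P \<Longrightarrow> fst p = snd p' \<Longrightarrow> False"
  unfolding pairs_ok_def by (metis)

lemma ppos_lt: "pairs_ok n P \<Longrightarrow> T \<subseteq> P \<Longrightarrow> ppos T \<subseteq> {..<n}"
  unfolding ppos_def using po_lt1 po_lt2 by blast

lemma sum_pairs:
  assumes ok: "pairs_ok n P" and T: "T \<subseteq> P"
  shows "(\<Sum>k\<in>ppos T. g k) = (\<Sum>p\<in>T. g (fst p) + g (snd p))"
proof -
  have finT: "finite T" using po_fin[OF ok] T finite_subset by blast
  have e: "ppos T = (\<Union>p\<in>T. {fst p, snd p})" unfolding ppos_def by auto
  have disj: "\<forall>p\<in>T. \<forall>p'\<in>T. p \<noteq> p' \<longrightarrow> {fst p, snd p} \<inter> {fst p', snd p'} = {}"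
  proof (intro ballI impI)
    fix p p' assume p: "p \<in> T" and p': "p' \<in> T" and ne: "p \<noteq> p'"
    have pP: "p \<in> P" "p' \<in> P" using p p' T by auto
    show "{fst p, snd p} \<inter> {fst p', snd p'} = {}"
      using po_ff[OF ok pP] po_ss[OF ok pP] po_fs[OF ok pP] po_fs[OF ok pP(2) pP(1)] ne by auto
  qed
  have "(\<Sum>k\<in>ppos T. g k) = (\<Sum>p\<in>T. \<Sum>k\<in>{fst p, snd p}. g k)"
    unfolding e by (rule sum.UNION_disjoint[OF finT]) (use disj in auto)
  also have "\<dots> = (\<Sum>p\<in>T. g (fst p) + g (snd p))"
  proof (rule sum.cong[OF refl])
    fix p assume "p \<in> T"
    then have "fst p \<noteq> snd p" using po_ne[OF ok] T by auto
    then show "(\<Sum>k\<in>{fst p, snd p}. g k) = g (fst p) + g (snd p)" by simp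
  qed
  finally show ?thesis .
qed

lemma sum_supp:
  assumes "pairs_ok n P" "T \<subseteq> P" "\<And>k. k < n \<Longrightarrow> k \<notin> ppos T \<Longrightarrow> g k = 0"
  shows "(\<Sum>k<n. g k) = (\<Sum>k\<in>ppos T. g k)"
  by (rule sum.mono_neutral_right) (use ppos_lt[OF assms(1,2)] assms(3) in auto)

lemma sv_val: "x \<in> sign_vecs n s \<Longrightarrow> k < n \<Longrightarrow> x k = 1 \<or> x k = -1"
  unfolding sign_vecs_def by (auto simp: PiE_iff)
lemma sv_out: "x \<in> sign_vecs n s \<Longrightarrow> k \<ge> n \<Longrightarrow> x k = undefined"
  unfolding sign_vecs_def by (auto simp: PiE_iff extensional_def)
lemma sv_sum: "x \<in> sign_vecs n s \<Longrightarrow> (\<Sum>i<n. x i) = s"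
  unfolding sign_vecs_def by auto
lemma sv_intro: "(\<And>k. k < n \<Longrightarrow> x k = 1 \<or> x k = -1) \<Longrightarrow> (\<And>k. k \<ge> n \<Longrightarrow> x k = undefined)
   \<Longrightarrow> (\<Sum>i<n. x i) = s \<Longrightarrow> x \<in> sign_vecs n s"
  unfolding sign_vecs_def by (auto simp: PiE_iff extensional_def)
lemma sv_finite: "finite (sign_vecs n s)"
proof -
  have "sign_vecs n s \<subseteq> PiE {..<n} (\<lambda>_. {-1, 1::int})" unfolding sign_vecs_def by auto
  moreover have "finite (PiE {..<n} (\<lambda>_. {-1, 1::int}))" by (rule finite_PiE) auto
  ultimately show ?thesis using finite_subset by blast
qed

definition classK :: "nat \<Rightarrow> int \<Rightarrow> (nat \<times> nat) set \<Rightarrow> (nat \<Rightarrow> int) \<Rightarrow> (nat \<Rightarrow> int) set" where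
  "classK n s P x = {y \<in> sign_vecs n s. disc P y = disc P x \<and> (\<forall>k<n. k \<notin> ppos (disc P x) \<longrightarrow> y k = x k)}"

definition phi :: "(nat \<times> nat) set \<Rightarrow> (nat \<times> nat) set \<Rightarrow> (nat \<Rightarrow> int) \<Rightarrow> (nat \<Rightarrow> int)" where
  "phi D V x = (\<lambda>k. if k \<in> fst ` V then 1 else if k \<in> snd ` V then -1
      else if k \<in> fst ` (D - V) then -1 else if k \<in> snd ` (D - V) then 1 else x k)"

context
  fixes n :: nat and P D V :: "(nat \<times> nat) set" and x :: "nat \<Rightarrow> int"
  assumes ok: "pairs_ok n P" and DP: "D \<subseteq> P" and VD: "V \<subseteq> D"
begin

lemma phi_fst_in: "p \<in> V \<Longrightarrow> phi D V x (fst p) = 1"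
  unfolding phi_def by auto

lemma phi_snd_in: "p \<in> V \<Longrightarrow> phi D V x (snd p) = -1"
proof -
  assume p: "p \<in> V"
  have "snd p \<notin> fst ` V"
  proof
    assume "snd p \<in> fst ` V"
    then obtain p' where "p' \<in> V" "snd p = fst p'" by auto
    then show False using po_fs[OF ok, of p' p] p VD DP by auto
  qed
  then show ?thesis using p unfolding phi_def by auto
qed

lemma phi_fst_out: "p \<in> D \<Longrightarrow> p \<notin> V \<Longrightarrow> phi D V x (fst p) = -1"
proof -
  assume p: "p \<in> D" "p \<notin> V"
  have a: "fst p \<notin> fst ` V"
  proof
    assume "fst p \<in> fst ` V"
    then obtain p' where "p' \<in> V" "fst p = fst p'" by auto
    then show False using po_ff[OF ok, of p p'] p VD DP by auto
  qed
  have b: "fst p \<notin> snd ` V"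
  proof
    assume "fst p \<in> snd ` V"
    then obtain p' where "p' \<in> V" "fst p = snd p'" by auto
    then show False using po_fs[OF ok, of p p'] p VD DP by auto
  qed
  show ?thesis using a b p unfolding phi_def by auto
qed

lemma phi_snd_out: "p \<in> D \<Longrightarrow> p \<notin> V \<Longrightarrow> phi D V x (snd p) = 1"
proof -
  assume p: "p \<in> D" "p \<notin> V"
  have a: "snd p \<notin> fst ` V"
  proof
    assume "snd p \<in> fst ` V"
    then obtain p' where "p' \<in> V" "snd p = fst p'" by auto
    then show False using po_fs[OF ok, of p' p] p VD DP by auto
  qed
  have b: "snd p \<notin> snd ` V"
  proof
    assume "snd p \<in> snd ` V"
    then obtain p' where "p' \<in> V" "snd p = snd p'" by auto
    then show False using po_ss[OF ok, of p p'] p VD DP by auto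
  qed
  have c: "snd p \<notin> fst ` (D - V)"
  proof
    assume "snd p \<in> fst ` (D - V)"
    then obtain p' where "p' \<in> D" "snd p = fst p'" by auto
    then show False using po_fs[OF ok, of p' p] p DP by auto
  qed
  show ?thesis using a b c p unfolding phi_def by auto
qed

lemma phi_other: "k \<notin> ppos D \<Longrightarrow> phi D V x k = x k"
  unfolding phi_def ppos_def using VD by auto

end

lemma class_card:
  assumes ok: "pairs_ok n P" and x: "x \<in> sign_vecs n s"
  shows "2 ^ card (disc P x) \<le> card (classK n s P x)"
proof -
  define D where "D = disc P x"
  have DP: "D \<subseteq> P" unfolding D_def disc_def by auto
  have finD: "finite D" using po_fin[OF ok] DP finite_subset by blast
  have xD: "x (snd p) = - x (fst p)" if "p \<in> D" for p
  proof -
    have "p \<in> P" "x (fst p) \<noteq> x (snd p)" using that unfolding D_def disc_def by auto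
    moreover have "x (fst p) = 1 \<or> x (fst p) = -1" "x (snd p) = 1 \<or> x (snd p) = -1"
      using sv_val[OF x] po_lt1[OF ok] po_lt2[OF ok] calculation(1) by auto
    ultimately show ?thesis by auto
  qed
  have mem: "phi D V x \<in> classK n s P x" if VD: "V \<subseteq> D" for V
  proof -
    let ?y = "phi D V x"
    have oth: "?y k = x k" if "k \<notin> ppos D" for k using phi_other[OF ok DP VD that] .
    have yD: "?y (snd p) = - ?y (fst p)" if "p \<in> D" for p
    proof (cases "p \<in> V")
      case True
      then show ?thesis using phi_fst_in[OF ok DP VD True] phi_snd_in[OF ok DP VD True] by simp
    next
      case False
      then show ?thesis using phi_fst_out[OF ok DP VD that False] phi_snd_out[OF ok DP VD that False] by simp
    qed
    have ppn: "ppos D \<subseteq> {..<n}" using ppos_lt[OF ok DP] .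
    have val: "?y k = 1 \<or> ?y k = -1" if "k < n" for k
    proof -
      have "?y k = 1 \<or> ?y k = -1 \<or> ?y k = x k" unfolding phi_def by simp
      then show ?thesis using sv_val[OF x that] by auto
    qed
    have out: "?y k = undefined" if "k \<ge> n" for k
    proof -
      have "k \<notin> ppos D" using ppn that by auto
      then show ?thesis using oth sv_out[OF x that] by simp
    qed
    have "(\<Sum>i<n. ?y i) - (\<Sum>i<n. x i) = (\<Sum>i<n. ?y i - x i)" by (simp add: sum_subtractf)
    also have "\<dots> = (\<Sum>i\<in>ppos D. ?y i - x i)"
      by (rule sum_supp[OF ok DP]) (use oth in auto)
    also have "\<dots> = (\<Sum>p\<in>D. (?y (fst p) - x (fst p)) + (?y (snd p) - x (snd p)))"
      by (rule sum_pairs[OF ok DP])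
    also have "\<dots> = 0" using yD xD by (intro sum.neutral) auto
    finally have sm: "(\<Sum>i<n. ?y i) = s" using sv_sum[OF x] by simp
    have ysv: "?y \<in> sign_vecs n s" by (rule sv_intro) (use val out sm in auto)
    have dd: "disc P ?y = D"
    proof
      show "disc P ?y \<subseteq> D"
      proof
        fix p assume "p \<in> disc P ?y"
        then have pP: "p \<in> P" and ne: "?y (fst p) \<noteq> ?y (snd p)" unfolding disc_def by auto
        show "p \<in> D"
        proof (rule ccontr)
          assume nD: "p \<notin> D"
          have "fst p \<notin> ppos D"
          proof
            assume "fst p \<in> ppos D"
            then obtain p' where p': "p' \<in> D" "fst p = fst p' \<or> fst p = snd p'" unfolding ppos_def by auto
            then have "p' \<in> P" using DP by auto
            then show False using p' po_ff[OF ok pP \<open>p' \<in> P\<close>] po_fs[OF ok pP \<open>p' \<in> P\<close>] nD by auto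
          qed
          moreover have "snd p \<notin> ppos D"
          proof
            assume "snd p \<in> ppos D"
            then obtain p' where p': "p' \<in> D" "snd p = fst p' \<or> snd p = snd p'" unfolding ppos_def by auto
            then have "p' \<in> P" using DP by auto
            then show False using p' po_ss[OF ok pP \<open>p' \<in> P\<close>] po_fs[OF ok \<open>p' \<in> P\<close> pP] nD by auto
          qed
          ultimately have "?y (fst p) = x (fst p)" "?y (snd p) = x (snd p)" using oth by auto
          moreover have "x (fst p) = x (snd p)" using nD pP unfolding D_def disc_def by auto
          ultimately show False using ne by simp
        qed
      qed
    next
      show "D \<subseteq> disc P ?y"
      proof
        fix p assume pD: "p \<in> D"
        then have "p \<in> P" using DP by auto
        moreover have "?y (fst p) \<noteq> ?y (snd p)"
        proof -
          have "?y (fst p) = 1 \<or> ?y (fst p) = -1" using val po_lt1[OF ok \<open>p\<in>P\<close>] by blast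
          then show ?thesis using yD[OF pD] by auto
        qed
        ultimately show "p \<in> disc P ?y" unfolding disc_def by auto
      qed
    qed
    have "\<forall>k<n. k \<notin> ppos (disc P x) \<longrightarrow> ?y k = x k" using oth unfolding D_def by blast
    then show ?thesis unfolding classK_def using ysv dd unfolding D_def by blast
  qed
  have inj: "inj_on (\<lambda>V. phi D V x) (Pow D)"
  proof (rule inj_onI)
    fix V V' assume V: "V \<in> Pow D" and V': "V' \<in> Pow D" and eq: "phi D V x = phi D V' x"
    have key: "phi D W x (fst p) = 1 \<longleftrightarrow> p \<in> W" if "W \<subseteq> D" "p \<in> D" for W p
    proof (cases "p \<in> W")
      case True
      then show ?thesis using phi_fst_in[OF ok DP that(1) True] by simp
    next
      case False
      then show ?thesis using phi_fst_out[OF ok DP that False] by simp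
    qed
    have "p \<in> V \<longleftrightarrow> p \<in> V'" if "p \<in> D" for p
      using key[of V p] key[of V' p] V V' that eq by auto
    then show "V = V'" using V V' by (simp add: subset_iff set_eq_iff) blast
  qed
  have "2 ^ card D = card (Pow D)" using finD by (simp add: card_Pow)
  also have "\<dots> = card ((\<lambda>V. phi D V x) ` Pow D)" using card_image[OF inj] by simp
  also have "\<dots> \<le> card (classK n s P x)"
  proof (rule card_mono)
    show "finite (classK n s P x)" using sv_finite unfolding classK_def by auto
    show "(\<lambda>V. phi D V x) ` Pow D \<subseteq> classK n s P x" using mem by auto
  qed
  finally show ?thesis unfolding D_def .
qed

lemma class_good:
  assumes ok: "pairs_ok n P" and x: "x \<in> sign_vecs n s"
    and wpos: "\<forall>p\<in>P. w (fst p) - w (snd p) > \<beta>" and b0: "\<beta> \<ge> 0"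
  shows "card {y \<in> classK n s P x. \<bar>Ssum n w y - t\<bar> \<le> \<beta>} \<le> card (disc P x) choose (card (disc P x) div 2)"
proof -
  define D where "D = disc P x"
  have DP: "D \<subseteq> P" unfolding D_def disc_def by auto
  have finD: "finite D" using po_fin[OF ok] DP finite_subset by blast
  define K where "K = classK n s P x"
  define G where "G = {y \<in> K. \<bar>Ssum n w y - t\<bar> \<le> \<beta>}"
  define U where "U y = {p\<in>D. y (fst p) = 1}" for y :: "nat \<Rightarrow> int"
  have yK: "y \<in> sign_vecs n s" "disc P y = D" "\<And>k. k < n \<Longrightarrow> k \<notin> ppos D \<Longrightarrow> y k = x k"
    if "y \<in> K" for y using that unfolding K_def classK_def D_def by auto
  have yf: "y (fst p) = (if p \<in> U y then 1 else -1)" if "y \<in> K" "p \<in> D" for y p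
  proof -
    have "p \<in> P" using that DP by auto
    then have "y (fst p) = 1 \<or> y (fst p) = -1" using sv_val[OF yK(1)[OF that(1)]] po_lt1[OF ok] by blast
    then show ?thesis unfolding U_def using that(2) by auto
  qed
  have ys: "y (snd p) = (if p \<in> U y then -1 else 1)" if "y \<in> K" "p \<in> D" for y p
  proof -
    have pP: "p \<in> P" using that DP by auto
    have "p \<in> disc P y" using yK(2)[OF that(1)] that(2) by simp
    then have ne: "y (fst p) \<noteq> y (snd p)" unfolding disc_def by auto
    have "y (snd p) = 1 \<or> y (snd p) = -1" using sv_val[OF yK(1)[OF that(1)]] po_lt2[OF ok pP] by blast
    then show ?thesis using ne yf[OF that] by (auto split: if_splits)
  qed
  have inppos: "\<exists>p\<in>T. k = fst p \<or> k = snd p" if "k \<in> ppos T" for k T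
    using that unfolding ppos_def by auto
  have inj: "inj_on U K"
  proof (rule inj_onI)
    fix y y' assume y: "y \<in> K" and y': "y' \<in> K" and eq: "U y = U y'"
    show "y = y'"
    proof
      fix k
      show "y k = y' k"
      proof (cases "k < n")
        case False
        then show ?thesis using sv_out[OF yK(1)[OF y]] sv_out[OF yK(1)[OF y']] by simp
      next
        case True
        show ?thesis
        proof (cases "k \<in> ppos D")
          case False
          then show ?thesis using yK(3)[OF y True] yK(3)[OF y' True] by simp
        next
          case kin: True
          then obtain p where p: "p \<in> D" "k = fst p \<or> k = snd p" using inppos by blast
          then show ?thesis using yf[OF y p(1)] yf[OF y' p(1)] ys[OF y p(1)] ys[OF y' p(1)] eq by auto
        qed
      qed
    qed
  qed
  have anti: "\<forall>A\<in>U ` G. \<forall>B\<in>U ` G. A \<subseteq> B \<longrightarrow> A = B"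
  proof (intro ballI impI)
    fix A B assume "A \<in> U ` G" "B \<in> U ` G" and AB: "A \<subseteq> B"
    then obtain y y' where y: "y \<in> G" "A = U y" and y': "y' \<in> G" "B = U y'" by auto
    have yk: "y \<in> K" and y'k: "y' \<in> K" using y y' unfolding G_def by auto
    show "A = B"
    proof (rule ccontr)
      assume "A \<noteq> B"
      define T where "T = U y' - U y"
      have TD: "T \<subseteq> D" unfolding T_def U_def by auto
      have TP: "T \<subseteq> P" using TD DP by auto
      obtain p0 where p0: "p0 \<in> T" using \<open>A \<noteq> B\<close> AB y y' unfolding T_def by blast
      have finT: "finite T" using finD TD finite_subset by blast
      have "Ssum n w y' - Ssum n w y = (\<Sum>k<n. (real_of_int (y' k) - real_of_int (y k)) * w k)"
        unfolding Ssum_def by (simp add: sum_subtractf algebra_simps)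
      also have "\<dots> = (\<Sum>k\<in>ppos T. (real_of_int (y' k) - real_of_int (y k)) * w k)"
      proof (rule sum_supp[OF ok TP])
        fix k assume kn: "k < n" and kT: "k \<notin> ppos T"
        show "(real_of_int (y' k) - real_of_int (y k)) * w k = 0"
        proof (cases "k \<in> ppos D")
          case False
          then show ?thesis using yK(3)[OF yk kn] yK(3)[OF y'k kn] by simp
        next
          case True
          then obtain p where p: "p \<in> D" "k = fst p \<or> k = snd p" using inppos by blast
          have "p \<notin> T" using kT p(2) unfolding ppos_def by force
          then have "p \<in> U y \<longleftrightarrow> p \<in> U y'" using AB y y' unfolding T_def by blast
          then have "y k = y' k" using yf[OF yk p(1)] yf[OF y'k p(1)] ys[OF yk p(1)] ys[OF y'k p(1)] p(2) by auto
          then show ?thesis by simp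
        qed
      qed
      also have "\<dots> = (\<Sum>p\<in>T. (real_of_int (y' (fst p)) - real_of_int (y (fst p))) * w (fst p)
                          + (real_of_int (y' (snd p)) - real_of_int (y (snd p))) * w (snd p))"
        by (rule sum_pairs[OF ok TP])
      also have "\<dots> = (\<Sum>p\<in>T. 2 * (w (fst p) - w (snd p)))"
      proof (rule sum.cong[OF refl])
        fix p assume pT: "p \<in> T"
        then have pD: "p \<in> D" and in': "p \<in> U y'" and nin: "p \<notin> U y" using TD unfolding T_def by auto
        show "(real_of_int (y' (fst p)) - real_of_int (y (fst p))) * w (fst p)
               + (real_of_int (y' (snd p)) - real_of_int (y (snd p))) * w (snd p) = 2 * (w (fst p) - w (snd p))"
          using yf[OF yk pD] yf[OF y'k pD] ys[OF yk pD] ys[OF y'k pD] in' nin by (simp add: algebra_simps)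
      qed
      also have "\<dots> \<ge> 2 * (w (fst p0) - w (snd p0))"
        by (rule member_le_sum[OF p0 _ finT]) (use wpos TP b0 in force)
      finally have big: "Ssum n w y' - Ssum n w y \<ge> 2 * (w (fst p0) - w (snd p0))" .
      have "w (fst p0) - w (snd p0) > \<beta>" using wpos TP p0 by auto
      moreover have "\<bar>Ssum n w y - t\<bar> \<le> \<beta>" "\<bar>Ssum n w y' - t\<bar> \<le> \<beta>" using y y' unfolding G_def by auto
      then have "Ssum n w y' - t \<le> \<beta>" "t - Ssum n w y \<le> \<beta>" by (auto simp: abs_le_iff)
      ultimately show False using big by (smt (verit))
    qed
  qed
  have "card G = card (U ` G)" using card_image[OF inj_on_subset[OF inj]] unfolding G_def by auto
  also have "\<dots> \<le> card D choose (card D div 2)"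
    by (rule sperner[OF finD _ anti]) (auto simp: U_def)
  finally show ?thesis unfolding G_def K_def D_def .
qed

definition Bf :: "nat \<Rightarrow> real" where "Bf d = real (d choose (d div 2)) / 2^d"

lemma Bf_le1: "Bf d \<le> 1"
proof -
  have "d choose (d div 2) \<le> 2^d" using binomial_le_pow2 by blast
  then have "real (d choose (d div 2)) \<le> 2^d" by (metis of_nat_le_iff of_nat_numeral of_nat_power)
  then show ?thesis unfolding Bf_def by simp
qed

lemma Bf_nonneg: "Bf d \<ge> 0" unfolding Bf_def by simp

lemma Bf_sq: "(Bf d)^2 * (d+1) \<le> 1" unfolding Bf_def by (rule central_binom)

lemma good_le_sumB:
  assumes ok: "pairs_ok n P" and wpos: "\<forall>p\<in>P. w (fst p) - w (snd p) > \<beta>" and b0: "\<beta> \<ge> 0"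
  shows "real (card {y\<in>sign_vecs n s. \<bar>Ssum n w y - t\<bar> \<le> \<beta>}) \<le> (\<Sum>y\<in>sign_vecs n s. Bf (card (disc P y)))"
proof -
  define \<Omega> where "\<Omega> = sign_vecs n s"
  have fin: "finite \<Omega>" unfolding \<Omega>_def by (rule sv_finite)
  define key where "key y = (disc P y, \<lambda>k. if k < n \<and> k \<notin> ppos (disc P y) then y k else 0)" for y :: "nat \<Rightarrow> int"
  define g where "g y = (if \<bar>Ssum n w y - t\<bar> \<le> \<beta> then 1 else (0::real))" for y
  have cls: "{y\<in>\<Omega>. key y = key x} = classK n s P x" if x: "x \<in> \<Omega>" for x
  proof
    show "{y\<in>\<Omega>. key y = key x} \<subseteq> classK n s P x"
    proof
      fix y assume "y \<in> {y\<in>\<Omega>. key y = key x}"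
      then have y: "y \<in> \<Omega>" and e: "key y = key x" by auto
      have d: "disc P y = disc P x" using e unfolding key_def by simp
      have f: "(\<lambda>k. if k < n \<and> k \<notin> ppos (disc P x) then y k else 0) = (\<lambda>k. if k < n \<and> k \<notin> ppos (disc P x) then x k else 0)"
        using e unfolding key_def d by simp
      have "y k = x k" if "k < n" "k \<notin> ppos (disc P x)" for k
        using fun_cong[OF f, of k] that by simp
      then show "y \<in> classK n s P x" unfolding classK_def using y d \<Omega>_def by auto
    qed
  next
    show "classK n s P x \<subseteq> {y\<in>\<Omega>. key y = key x}"
    proof
      fix y assume y: "y \<in> classK n s P x"
      then have d: "disc P y = disc P x" and e: "\<forall>k<n. k \<notin> ppos (disc P x) \<longrightarrow> y k = x k"
        and ys: "y \<in> \<Omega>" unfolding classK_def \<Omega>_def by auto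
      have "key y = key x" unfolding key_def d using e by auto
      then show "y \<in> {y\<in>\<Omega>. key y = key x}" using ys by auto
    qed
  qed
  have "real (card {y\<in>\<Omega>. \<bar>Ssum n w y - t\<bar> \<le> \<beta>}) = (\<Sum>y\<in>\<Omega>. g y)"
    unfolding g_def using fin by (simp add: sum.If_cases Int_def)
  also have "\<dots> = (\<Sum>\<kappa>\<in>key ` \<Omega>. \<Sum>y\<in>{y\<in>\<Omega>. key y = \<kappa>}. g y)"
    by (rule sum.image_gen[OF fin])
  also have "\<dots> \<le> (\<Sum>\<kappa>\<in>key ` \<Omega>. \<Sum>y\<in>{y\<in>\<Omega>. key y = \<kappa>}. Bf (card (disc P y)))"
  proof (rule sum_mono)
    fix \<kappa> assume "\<kappa> \<in> key ` \<Omega>"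
    then obtain x where x: "x \<in> \<Omega>" and k: "\<kappa> = key x" by auto
    have xs: "x \<in> sign_vecs n s" using x unfolding \<Omega>_def .
    define d where "d = card (disc P x)"
    have finK: "finite (classK n s P x)" using sv_finite unfolding classK_def by auto
    have "(\<Sum>y\<in>{y\<in>\<Omega>. key y = \<kappa>}. g y) = (\<Sum>y\<in>classK n s P x. g y)" unfolding k cls[OF x] ..
    also have "\<dots> = real (card {y\<in>classK n s P x. \<bar>Ssum n w y - t\<bar> \<le> \<beta>})"
      unfolding g_def using finK by (simp add: sum.If_cases Int_def)
    also have "\<dots> \<le> real (d choose (d div 2))"
      using class_good[OF ok xs wpos b0, of t] unfolding d_def by linarith
    also have "\<dots> = 2^d * Bf d" unfolding Bf_def by simp
    also have "\<dots> \<le> real (card (classK n s P x)) * Bf d"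
    proof (rule mult_right_mono)
      show "(2::real)^d \<le> real (card (classK n s P x))"
        using class_card[OF ok xs] unfolding d_def by (metis of_nat_le_iff of_nat_numeral of_nat_power)
    qed (rule Bf_nonneg)
    also have "\<dots> = (\<Sum>y\<in>classK n s P x. Bf (card (disc P y)))"
    proof -
      have "(\<Sum>y\<in>classK n s P x. Bf (card (disc P y))) = (\<Sum>y\<in>classK n s P x. Bf d)"
        by (rule sum.cong[OF refl]) (simp add: classK_def d_def)
      then show ?thesis by simp
    qed
    also have "\<dots> = (\<Sum>y\<in>{y\<in>\<Omega>. key y = \<kappa>}. Bf (card (disc P y)))" unfolding k cls[OF x] ..
    finally show "(\<Sum>y\<in>{y\<in>\<Omega>. key y = \<kappa>}. g y) \<le> (\<Sum>y\<in>{y\<in>\<Omega>. key y = \<kappa>}. Bf (card (disc P y)))" .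
  qed
  also have "\<dots> = (\<Sum>y\<in>\<Omega>. Bf (card (disc P y)))"
    by (rule sum.image_gen[OF fin, symmetric])
  finally show ?thesis unfolding \<Omega>_def .
qed

definition tr :: "nat \<Rightarrow> nat \<Rightarrow> nat \<Rightarrow> nat" where
  "tr a b k = (if k = a then b else if k = b then a else k)"

lemma tr_tr: "tr a b (tr a b k) = k" unfolding tr_def by auto

lemma tr_lt: "a < n \<Longrightarrow> b < n \<Longrightarrow> k < n \<Longrightarrow> tr a b k < n" unfolding tr_def by auto

lemma tr_bij: "a < n \<Longrightarrow> b < n \<Longrightarrow> bij_betw (tr a b) {..<n} {..<n}"
  by (rule bij_betw_byWitness[where f' = "tr a b"]) (auto simp: tr_tr tr_lt)

lemma sv_tr: assumes "a < n" "b < n" "x \<in> sign_vecs n s" shows "(\<lambda>k. x (tr a b k)) \<in> sign_vecs n s"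
proof (rule sv_intro)
  fix k assume "k < n" then show "x (tr a b k) = 1 \<or> x (tr a b k) = -1" using sv_val[OF assms(3)] tr_lt assms by blast
next
  fix k assume "n \<le> k" then have "tr a b k = k" using assms unfolding tr_def by auto
  then show "x (tr a b k) = undefined" using sv_out[OF assms(3)] \<open>n \<le> k\<close> by simp
next
  have "(\<Sum>i<n. x (tr a b i)) = (\<Sum>i<n. x i)"
    using sum.reindex_bij_betw[OF tr_bij[OF assms(1,2)], of x] by simp
  then show "(\<Sum>i<n. x (tr a b i)) = s" using sv_sum[OF assms(3)] by simp
qed

lemma card_tr:
  assumes "a < n" "b < n"
  shows "card {x\<in>sign_vecs n s. Q (\<lambda>k. x (tr a b k))} = card {x\<in>sign_vecs n s. Q x}"
proof (rule bij_betw_same_card[where f = "\<lambda>x k. x (tr a b k)"])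
  show "bij_betw (\<lambda>x k. x (tr a b k)) {x\<in>sign_vecs n s. Q (\<lambda>k. x (tr a b k))} {x\<in>sign_vecs n s. Q x}"
    by (rule bij_betw_byWitness[where f' = "\<lambda>x k. x (tr a b k)"]) (auto simp: tr_tr sv_tr[OF assms])
qed

definition C2 :: "nat \<Rightarrow> int \<Rightarrow> nat \<Rightarrow> nat \<Rightarrow> nat" where
  "C2 n s i j = card {x\<in>sign_vecs n s. x i \<noteq> x j}"
definition C4 :: "nat \<Rightarrow> int \<Rightarrow> nat \<Rightarrow> nat \<Rightarrow> nat \<Rightarrow> nat \<Rightarrow> nat" where
  "C4 n s i j k l = card {x\<in>sign_vecs n s. x i \<noteq> x j \<and> x k \<noteq> x l}"

lemma C2_tr: "u < n \<Longrightarrow> v < n \<Longrightarrow> C2 n s (tr u v i) (tr u v j) = C2 n s i j"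
  unfolding C2_def using card_tr[of u n v s "\<lambda>x. x i \<noteq> x j"] by simp

lemma C4_tr: "u < n \<Longrightarrow> v < n \<Longrightarrow> C4 n s (tr u v i) (tr u v j) (tr u v k) (tr u v l) = C4 n s i j k l"
  unfolding C4_def using card_tr[of u n v s "\<lambda>x. x i \<noteq> x j \<and> x k \<noteq> x l"] by simp

lemma C2_norm:
  assumes "i < n" "j < n" "i \<noteq> j"
  shows "C2 n s i j = C2 n s 0 1"
proof -
  have n: "1 < n" using assms by auto
  have "C2 n s i j = C2 n s (tr 0 i 0) (tr 0 i (tr 0 i j))" by (simp add: tr_tr, simp add: tr_def)
  also have "\<dots> = C2 n s 0 (tr 0 i j)" by (rule C2_tr) (use assms in auto)
  finally have 1: "C2 n s i j = C2 n s 0 (tr 0 i j)" .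
  define j' where "j' = tr 0 i j"
  have j': "j' \<noteq> 0" "j' < n" unfolding j'_def using assms tr_lt[of 0 n i j] unfolding tr_def by auto
  have "C2 n s 0 j' = C2 n s (tr 1 j' 0) (tr 1 j' 1)" using j' by (simp add: tr_def)
  also have "\<dots> = C2 n s 0 1" by (rule C2_tr) (use j' n in auto)
  finally show ?thesis using 1 unfolding j'_def by simp
qed

lemma C4_step:
  assumes "u < n" "v < n"
  shows "C4 n s i j k l = C4 n s (tr u v i) (tr u v j) (tr u v k) (tr u v l)"
  using C4_tr[OF assms, of s i j k l] by simp

lemma C4_norm:
  assumes "i < n" "j < n" "k < n" "l < n" "distinct [i, j, k, l]"
  shows "C4 n s i j k l = C4 n s 0 1 2 3"
proof -
  have "card {i, j, k, l} = 4" using assms(5) by simp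
  moreover have "{i, j, k, l} \<subseteq> {..<n}" using assms by auto
  ultimately have n4: "4 \<le> n" by (metis card_lessThan card_mono finite_lessThan)
  define j1 where "j1 = tr 0 i j"
  define k1 where "k1 = tr 0 i k"
  define l1 where "l1 = tr 0 i l"
  have s1: "C4 n s i j k l = C4 n s 0 j1 k1 l1"
    using C4_step[of 0 n i s i j k l] assms unfolding j1_def k1_def l1_def by (simp add: tr_def)
  have d1: "j1 < n" "k1 < n" "l1 < n" "distinct [0, j1, k1, l1]"
    unfolding j1_def k1_def l1_def using assms unfolding tr_def by auto
  define k2 where "k2 = tr 1 j1 k1"
  define l2 where "l2 = tr 1 j1 l1"
  have s2: "C4 n s 0 j1 k1 l1 = C4 n s 0 1 k2 l2"
    using C4_step[of 1 n j1 s 0 j1 k1 l1] d1 n4 unfolding k2_def l2_def by (simp add: tr_def)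
  have d2: "k2 < n" "l2 < n" "distinct [0, 1, k2, l2]"
    unfolding k2_def l2_def using d1 n4 unfolding tr_def by auto
  define l3 where "l3 = tr 2 k2 l2"
  have s3: "C4 n s 0 1 k2 l2 = C4 n s 0 1 2 l3"
    using C4_step[of 2 n k2 s 0 1 k2 l2] d2 n4 unfolding l3_def by (simp add: tr_def)
  have d3: "l3 < n" "distinct [0, 1, 2, l3]"
    unfolding l3_def using d2 n4 unfolding tr_def by auto
  have s4: "C4 n s 0 1 2 l3 = C4 n s 0 1 2 3"
    using C4_step[of 3 n l3 s 0 1 2 l3] d3 n4 by (simp add: tr_def)
  show ?thesis using s1 s2 s3 s4 by simp
qed

abbreviation I :: "(nat \<Rightarrow> int) \<Rightarrow> nat \<Rightarrow> nat \<Rightarrow> real" where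
  "I x i j \<equiv> of_bool (x i \<noteq> x j)"

lemma sum_bool: "finite A \<Longrightarrow> (\<Sum>x\<in>A. (of_bool (Q x) :: real)) = real (card {x\<in>A. Q x})"
  by (simp add: Int_def)

lemma cnt_pm:
  assumes x: "x \<in> sign_vecs n s"
  shows "real (card {k\<in>{..<n}. x k = 1}) + real (card {k\<in>{..<n}. x k = -1}) = real n"
    and "real (card {k\<in>{..<n}. x k = 1}) - real (card {k\<in>{..<n}. x k = -1}) = real_of_int s"
proof -
  define A where "A = {k\<in>{..<n}. x k = 1}"
  define B where "B = {k\<in>{..<n}. x k = -1}"
  have AB: "A \<union> B = {..<n}"
  proof
    show "A \<union> B \<subseteq> {..<n}" unfolding A_def B_def by blast
    show "{..<n} \<subseteq> A \<union> B"
    proof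
      fix k assume "k \<in> {..<n}"
      then have "k < n" by simp
      then have "x k = 1 \<or> x k = -1" by (rule sv_val[OF x])
      then show "k \<in> A \<union> B" unfolding A_def B_def using \<open>k < n\<close> by blast
    qed
  qed
  have dj: "A \<inter> B = {}" unfolding A_def B_def by auto
  have fA: "finite A" "finite B" unfolding A_def B_def by auto
  have h: "card A + card B = n" using card_Un_disjoint[OF fA dj] AB by simp
  then show "real (card {k\<in>{..<n}. x k = 1}) + real (card {k\<in>{..<n}. x k = -1}) = real n"
    unfolding A_def[symmetric] B_def[symmetric] by (simp flip: of_nat_add)
  have "(\<Sum>k\<in>A \<union> B. x k) = (\<Sum>k\<in>A. x k) + (\<Sum>k\<in>B. x k)" by (rule sum.union_disjoint[OF fA dj])
  then have s1: "(\<Sum>k<n. x k) = (\<Sum>k\<in>A. x k) + (\<Sum>k\<in>B. x k)" unfolding AB .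
  have sA: "(\<Sum>k\<in>A. x k) = (\<Sum>k\<in>A. 1)" by (rule sum.cong) (auto simp: A_def)
  have sB: "(\<Sum>k\<in>B. x k) = (\<Sum>k\<in>B. -1)" by (rule sum.cong) (auto simp: B_def)
  have "int (card A) - int (card B) = s" using s1 sA sB sv_sum[OF x] by simp
  then have "real_of_int (int (card A) - int (card B)) = real_of_int s" by simp
  then show "real (card {k\<in>{..<n}. x k = 1}) - real (card {k\<in>{..<n}. x k = -1}) = real_of_int s"
    unfolding A_def[symmetric] B_def[symmetric] by simp
qed

lemma cnt2:
  assumes T: "finite T" and v: "\<forall>k\<in>T. x k = 1 \<or> x k = -1"
  shows "(\<Sum>k\<in>T. \<Sum>l\<in>T-{k}. I x k l) = 2 * real (card {k\<in>T. x k = 1}) * real (card {k\<in>T. x k = -1})"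
proof -
  define A where "A = {k\<in>T. x k = 1}"
  define B where "B = {k\<in>T. x k = -1}"
  have inner: "(\<Sum>l\<in>T-{k}. I x k l) = (if x k = 1 then real (card B) else real (card A))" if k: "k \<in> T" for k
  proof -
    have "(\<Sum>l\<in>T-{k}. I x k l) = real (card {l\<in>T-{k}. x k \<noteq> x l})" by (intro sum_bool) (simp add: T)
    also have "{l\<in>T-{k}. x k \<noteq> x l} = (if x k = 1 then B else A)"
    proof (cases "x k = 1")
      case True
      have "{l\<in>T-{k}. x k \<noteq> x l} = B"
      proof
        show "{l\<in>T-{k}. x k \<noteq> x l} \<subseteq> B" unfolding B_def using v True by fastforce
        show "B \<subseteq> {l\<in>T-{k}. x k \<noteq> x l}" unfolding B_def using True by fastforce
      qed
      then show ?thesis using True by simp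
    next
      case False
      then have xk: "x k = -1" using v k by blast
      have "{l\<in>T-{k}. x k \<noteq> x l} = A"
      proof
        show "{l\<in>T-{k}. x k \<noteq> x l} \<subseteq> A" unfolding A_def using v xk by fastforce
        show "A \<subseteq> {l\<in>T-{k}. x k \<noteq> x l}" unfolding A_def using xk by fastforce
      qed
      then show ?thesis using False by simp
    qed
    finally show ?thesis by simp
  qed
  have "(\<Sum>k\<in>T. \<Sum>l\<in>T-{k}. I x k l) = (\<Sum>k\<in>T. if x k = 1 then real (card B) else real (card A))"
    using inner by (rule sum.cong[OF refl])
  also have "\<dots> = real (card (T \<inter> {k. x k = 1})) * real (card B) + real (card (T \<inter> - {k. x k = 1})) * real (card A)"
    using T by (simp add: sum.If_cases)
  also have "T \<inter> {k. x k = 1} = A" unfolding A_def by auto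
  also have "T \<inter> - {k. x k = 1} = B" unfolding B_def using v by auto
  finally show ?thesis unfolding A_def B_def by (simp add: algebra_simps)
qed

lemma aux_ab: "(a::real) + b = n \<Longrightarrow> a - b = t \<Longrightarrow> a = (n + t) / 2 \<and> b = (n - t) / 2"
  by (simp add: field_simps)

lemma ab_vals:
  assumes x: "x \<in> sign_vecs n s"
  shows "real (card {k\<in>{..<n}. x k = 1}) = (real n + real_of_int s) / 2"
    and "real (card {k\<in>{..<n}. x k = -1}) = (real n - real_of_int s) / 2"
proof -
  show "real (card {k\<in>{..<n}. x k = 1}) = (real n + real_of_int s) / 2" using aux_ab[OF cnt_pm[OF x]] by blast
  show "real (card {k\<in>{..<n}. x k = -1}) = (real n - real_of_int s) / 2" using aux_ab[OF cnt_pm[OF x]] by blast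
qed

lemma perx1:
  assumes x: "x \<in> sign_vecs n s"
  shows "(\<Sum>i<n. \<Sum>j\<in>{..<n}-{i}. I x i j) = 2 * ((real n + real_of_int s) / 2) * ((real n - real_of_int s) / 2)"
proof -
  have "(\<Sum>i<n. \<Sum>j\<in>{..<n}-{i}. I x i j) = 2 * real (card {k\<in>{..<n}. x k = 1}) * real (card {k\<in>{..<n}. x k = -1})"
    by (rule cnt2) (use sv_val[OF x] in auto)
  then show ?thesis by (simp only: ab_vals[OF x])
qed

lemma M1:
  "real n * (real n - 1) * real (C2 n s 0 1) =
     real (card (sign_vecs n s)) * (2 * ((real n + real_of_int s) / 2) * ((real n - real_of_int s) / 2))"
proof -
  define \<Omega> where "\<Omega> = sign_vecs n s"
  have fin: "finite \<Omega>" unfolding \<Omega>_def by (rule sv_finite)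
  have "real (card \<Omega>) * (2 * ((real n + real_of_int s) / 2) * ((real n - real_of_int s) / 2))
      = (\<Sum>x\<in>\<Omega>. \<Sum>i<n. \<Sum>j\<in>{..<n}-{i}. I x i j)"
  proof -
    have "(\<Sum>x\<in>\<Omega>. \<Sum>i<n. \<Sum>j\<in>{..<n}-{i}. I x i j) = (\<Sum>x\<in>\<Omega>. 2 * ((real n + real_of_int s) / 2) * ((real n - real_of_int s) / 2))"
      by (rule sum.cong[OF refl], rule perx1, simp add: \<Omega>_def)
    then show ?thesis by simp
  qed
  also have "\<dots> = (\<Sum>i<n. \<Sum>x\<in>\<Omega>. \<Sum>j\<in>{..<n}-{i}. I x i j)" by (rule sum.swap)
  also have "\<dots> = (\<Sum>i<n. \<Sum>j\<in>{..<n}-{i}. \<Sum>x\<in>\<Omega>. I x i j)"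
    by (rule sum.cong[OF refl], rule sum.swap)
  also have "\<dots> = (\<Sum>i<n. \<Sum>j\<in>{..<n}-{i}. real (C2 n s 0 1))"
  proof (intro sum.cong refl)
    fix i j assume i: "i \<in> {..<n}" and j: "j \<in> {..<n}-{i}"
    have "(\<Sum>x\<in>\<Omega>. I x i j) = real (C2 n s i j)" unfolding C2_def \<Omega>_def by (rule sum_bool[OF sv_finite])
    also have "C2 n s i j = C2 n s 0 1" by (rule C2_norm) (use i j in auto)
    finally show "(\<Sum>x\<in>\<Omega>. I x i j) = real (C2 n s 0 1)" .
  qed
  also have "\<dots> = real n * (real n - 1) * real (C2 n s 0 1)"
  proof -
    have "(\<Sum>j\<in>{..<n}-{i}. real (C2 n s 0 1)) = (real n - 1) * real (C2 n s 0 1)" if "i \<in> {..<n}" for i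
      using that by (simp add: of_nat_diff)
    then show ?thesis by simp
  qed
  finally show ?thesis unfolding \<Omega>_def by simp
qed

lemma card_rm: "finite S \<Longrightarrow> m \<in> S \<Longrightarrow> real (card (S - {m})) = real (card S) - 1"
proof -
  assume f: "finite S" and m: "m \<in> S"
  have c: "card (S - {m}) = card S - 1" using card_Diff_singleton[OF m] .
  have "S \<noteq> {}" using m by blast
  then have "card S \<noteq> 0" using f by simp
  then have "card S \<ge> 1" by simp
  then show ?thesis unfolding c by (simp add: of_nat_diff)
qed

lemma cnt_minus2:
  assumes x: "x \<in> sign_vecs n s" and ij: "i < n" "j < n" "x i \<noteq> x j"
  shows "real (card {k\<in>{..<n}-{i,j}. x k = 1}) = real (card {k\<in>{..<n}. x k = 1}) - 1"
    and "real (card {k\<in>{..<n}-{i,j}. x k = -1}) = real (card {k\<in>{..<n}. x k = -1}) - 1"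
proof -
  have vi: "x i = 1 \<or> x i = -1" and vj: "x j = 1 \<or> x j = -1" using sv_val[OF x] ij by auto
  have "real (card {k\<in>{..<n}-{i,j}. x k = 1}) = real (card {k\<in>{..<n}. x k = 1}) - 1 \<and>
        real (card {k\<in>{..<n}-{i,j}. x k = -1}) = real (card {k\<in>{..<n}. x k = -1}) - 1"
  proof (cases "x i = 1")
    case True
    then have xj: "x j = -1" using vj ij by auto
    have e1: "{k\<in>{..<n}-{i,j}. x k = 1} = {k\<in>{..<n}. x k = 1} - {i}" using True xj by auto
    have e2: "{k\<in>{..<n}-{i,j}. x k = -1} = {k\<in>{..<n}. x k = -1} - {j}" using True xj by auto
    show ?thesis unfolding e1 e2 by (intro conjI card_rm) (use ij True xj in auto)
  next
    case False
    then have xi: "x i = -1" and xj: "x j = 1" using vi vj ij by auto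
    have e1: "{k\<in>{..<n}-{i,j}. x k = 1} = {k\<in>{..<n}. x k = 1} - {j}" using xi xj by auto
    have e2: "{k\<in>{..<n}-{i,j}. x k = -1} = {k\<in>{..<n}. x k = -1} - {i}" using xi xj by auto
    show ?thesis unfolding e1 e2 by (intro conjI card_rm) (use ij xi xj in auto)
  qed
  then show "real (card {k\<in>{..<n}-{i,j}. x k = 1}) = real (card {k\<in>{..<n}. x k = 1}) - 1"
    and "real (card {k\<in>{..<n}-{i,j}. x k = -1}) = real (card {k\<in>{..<n}. x k = -1}) - 1" by auto
qed

lemma perx2:
  assumes x: "x \<in> sign_vecs n s"
  shows "(\<Sum>i<n. \<Sum>j\<in>{..<n}-{i}. \<Sum>k\<in>{..<n}-{i,j}. \<Sum>l\<in>{..<n}-{i,j}-{k}. I x i j * I x k l)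
       = (2 * ((real n + real_of_int s) / 2) * ((real n - real_of_int s) / 2)) *
         (2 * ((real n + real_of_int s) / 2 - 1) * ((real n - real_of_int s) / 2 - 1))"
proof -
  define c where "c = 2 * ((real n + real_of_int s) / 2 - 1) * ((real n - real_of_int s) / 2 - 1)"
  have inner: "(\<Sum>k\<in>{..<n}-{i,j}. \<Sum>l\<in>{..<n}-{i,j}-{k}. I x i j * I x k l) = I x i j * c"
    if i: "i < n" and j: "j \<in> {..<n}-{i}" for i j
  proof -
    have "(\<Sum>k\<in>{..<n}-{i,j}. \<Sum>l\<in>{..<n}-{i,j}-{k}. I x i j * I x k l)
        = I x i j * (\<Sum>k\<in>{..<n}-{i,j}. \<Sum>l\<in>{..<n}-{i,j}-{k}. I x k l)"
      by (simp add: sum_distrib_left del: sum_of_bool_eq)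
    also have "(\<Sum>k\<in>{..<n}-{i,j}. \<Sum>l\<in>{..<n}-{i,j}-{k}. I x k l)
        = 2 * real (card {k\<in>{..<n}-{i,j}. x k = 1}) * real (card {k\<in>{..<n}-{i,j}. x k = -1})"
      by (rule cnt2) (use sv_val[OF x] in auto)
    finally have e: "(\<Sum>k\<in>{..<n}-{i,j}. \<Sum>l\<in>{..<n}-{i,j}-{k}. I x i j * I x k l)
        = I x i j * (2 * real (card {k\<in>{..<n}-{i,j}. x k = 1}) * real (card {k\<in>{..<n}-{i,j}. x k = -1}))" .
    show ?thesis
    proof (cases "x i = x j")
      case True
      then show ?thesis using e by simp
    next
      case False
      have jn: "j < n" using j by auto
      show ?thesis unfolding e c_def cnt_minus2[OF x i jn False] ab_vals[OF x] by simp
    qed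
  qed
  have "(\<Sum>i<n. \<Sum>j\<in>{..<n}-{i}. \<Sum>k\<in>{..<n}-{i,j}. \<Sum>l\<in>{..<n}-{i,j}-{k}. I x i j * I x k l)
      = (\<Sum>i<n. \<Sum>j\<in>{..<n}-{i}. I x i j * c)"
    by (rule sum.cong[OF refl], rule sum.cong[OF refl], rule inner) auto
  also have "\<dots> = (\<Sum>i<n. \<Sum>j\<in>{..<n}-{i}. I x i j) * c"
    by (simp add: sum_distrib_right del: sum_of_bool_eq)
  also have "\<dots> = (2 * ((real n + real_of_int s) / 2) * ((real n - real_of_int s) / 2)) * c"
    unfolding perx1[OF x] ..
  finally show ?thesis unfolding c_def .
qed

lemma card_less1: "i < n \<Longrightarrow> real (card ({..<n} - {i})) = real n - 1"
  using card_rm[of "{..<n}" i] by simp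

lemma card_less2: "i < n \<Longrightarrow> j \<in> {..<n} - {i} \<Longrightarrow> real (card ({..<n} - {i, j})) = real n - 2"
proof -
  assume i: "i < n" and j: "j \<in> {..<n} - {i}"
  have e: "{..<n} - {i, j} = ({..<n} - {i}) - {j}" by auto
  show ?thesis unfolding e using card_rm[of "{..<n} - {i}" j] j card_less1[OF i] by simp
qed

lemma card_less3: "i < n \<Longrightarrow> j \<in> {..<n} - {i} \<Longrightarrow> k \<in> {..<n} - {i, j} \<Longrightarrow> real (card ({..<n} - {i, j} - {k})) = real n - 3"
proof -
  assume i: "i < n" and j: "j \<in> {..<n} - {i}" and k: "k \<in> {..<n} - {i, j}"
  show ?thesis using card_rm[of "{..<n} - {i, j}" k] k card_less2[OF i j] by simp
qed

lemma M2:
  "real n * (real n - 1) * (real n - 2) * (real n - 3) * real (C4 n s 0 1 2 3) =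
     real (card (sign_vecs n s)) * ((2 * ((real n + real_of_int s) / 2) * ((real n - real_of_int s) / 2)) *
         (2 * ((real n + real_of_int s) / 2 - 1) * ((real n - real_of_int s) / 2 - 1)))"
proof -
  define \<Omega> where "\<Omega> = sign_vecs n s"
  define c where "c = (2 * ((real n + real_of_int s) / 2) * ((real n - real_of_int s) / 2)) *
         (2 * ((real n + real_of_int s) / 2 - 1) * ((real n - real_of_int s) / 2 - 1))"
  define C where "C = real (C4 n s 0 1 2 3)"
  have "real (card \<Omega>) * c = (\<Sum>x\<in>\<Omega>. c)" by simp
  also have "\<dots> = (\<Sum>x\<in>\<Omega>. \<Sum>i<n. \<Sum>j\<in>{..<n}-{i}. \<Sum>k\<in>{..<n}-{i,j}. \<Sum>l\<in>{..<n}-{i,j}-{k}. I x i j * I x k l)"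
    by (rule sum.cong[OF refl]) (simp only: c_def perx2 \<Omega>_def)
  also have "\<dots> = (\<Sum>i<n. \<Sum>x\<in>\<Omega>. \<Sum>j\<in>{..<n}-{i}. \<Sum>k\<in>{..<n}-{i,j}. \<Sum>l\<in>{..<n}-{i,j}-{k}. I x i j * I x k l)"
    by (rule sum.swap)
  also have "\<dots> = (\<Sum>i<n. \<Sum>j\<in>{..<n}-{i}. \<Sum>x\<in>\<Omega>. \<Sum>k\<in>{..<n}-{i,j}. \<Sum>l\<in>{..<n}-{i,j}-{k}. I x i j * I x k l)"
    by (rule sum.cong[OF refl], rule sum.swap)
  also have "\<dots> = (\<Sum>i<n. \<Sum>j\<in>{..<n}-{i}. \<Sum>k\<in>{..<n}-{i,j}. \<Sum>x\<in>\<Omega>. \<Sum>l\<in>{..<n}-{i,j}-{k}. I x i j * I x k l)"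
    by (rule sum.cong[OF refl], rule sum.cong[OF refl], rule sum.swap)
  also have "\<dots> = (\<Sum>i<n. \<Sum>j\<in>{..<n}-{i}. \<Sum>k\<in>{..<n}-{i,j}. \<Sum>l\<in>{..<n}-{i,j}-{k}. \<Sum>x\<in>\<Omega>. I x i j * I x k l)"
    by (rule sum.cong[OF refl], rule sum.cong[OF refl], rule sum.cong[OF refl], rule sum.swap)
  also have "\<dots> = (\<Sum>i<n. \<Sum>j\<in>{..<n}-{i}. \<Sum>k\<in>{..<n}-{i,j}. \<Sum>l\<in>{..<n}-{i,j}-{k}. C)"
  proof (rule sum.cong[OF refl], rule sum.cong[OF refl], rule sum.cong[OF refl], rule sum.cong[OF refl])
    fix i j k l assume i: "i \<in> {..<n}" and j: "j \<in> {..<n}-{i}" and k: "k \<in> {..<n}-{i,j}" and l: "l \<in> {..<n}-{i,j}-{k}"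
    have "(\<Sum>x\<in>\<Omega>. I x i j * I x k l) = (\<Sum>x\<in>\<Omega>. of_bool (x i \<noteq> x j \<and> x k \<noteq> x l))"
      by (rule sum.cong[OF refl]) simp
    also have "\<dots> = real (C4 n s i j k l)" unfolding C4_def \<Omega>_def by (rule sum_bool[OF sv_finite])
    also have "C4 n s i j k l = C4 n s 0 1 2 3" by (rule C4_norm) (use i j k l in auto)
    finally show "(\<Sum>x\<in>\<Omega>. I x i j * I x k l) = C" unfolding C_def .
  qed
  also have "\<dots> = (\<Sum>i<n. \<Sum>j\<in>{..<n}-{i}. \<Sum>k\<in>{..<n}-{i,j}. (real n - 3) * C)"
    by (rule sum.cong[OF refl], rule sum.cong[OF refl], rule sum.cong[OF refl]) (simp add: card_less3)
  also have "\<dots> = (\<Sum>i<n. \<Sum>j\<in>{..<n}-{i}. (real n - 2) * ((real n - 3) * C))"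
    by (rule sum.cong[OF refl], rule sum.cong[OF refl]) (simp add: card_less2)
  also have "\<dots> = (\<Sum>i<n. (real n - 1) * ((real n - 2) * ((real n - 3) * C)))"
    by (rule sum.cong[OF refl]) (simp add: card_less1)
  also have "\<dots> = real n * (real n - 1) * (real n - 2) * (real n - 3) * C" by (simp add: algebra_simps)
  finally show ?thesis unfolding \<Omega>_def c_def C_def by simp
qed

lemma d_sum: "pairs_ok n P \<Longrightarrow> real (card (disc P x)) = (\<Sum>p\<in>P. I x (fst p) (snd p))"
  unfolding disc_def by (rule sum_bool[symmetric]) (rule po_fin)

lemma E1:
  assumes ok: "pairs_ok n P"
  shows "(\<Sum>x\<in>sign_vecs n s. real (card (disc P x))) = real (card P) * real (C2 n s 0 1)"
proof -
  have "(\<Sum>x\<in>sign_vecs n s. real (card (disc P x))) = (\<Sum>x\<in>sign_vecs n s. \<Sum>p\<in>P. I x (fst p) (snd p))"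
    by (rule sum.cong[OF refl]) (rule d_sum[OF ok])
  also have "\<dots> = (\<Sum>p\<in>P. \<Sum>x\<in>sign_vecs n s. I x (fst p) (snd p))" by (rule sum.swap)
  also have "\<dots> = (\<Sum>p\<in>P. real (C2 n s 0 1))"
  proof (rule sum.cong[OF refl])
    fix p assume p: "p \<in> P"
    have "(\<Sum>x\<in>sign_vecs n s. I x (fst p) (snd p)) = real (C2 n s (fst p) (snd p))"
      unfolding C2_def by (rule sum_bool[OF sv_finite])
    also have "C2 n s (fst p) (snd p) = C2 n s 0 1"
      by (rule C2_norm) (use po_lt1[OF ok p] po_lt2[OF ok p] po_ne[OF ok p] in auto)
    finally show "(\<Sum>x\<in>sign_vecs n s. I x (fst p) (snd p)) = real (C2 n s 0 1)" .
  qed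
  also have "\<dots> = real (card P) * real (C2 n s 0 1)" by simp
  finally show ?thesis .
qed

lemma E2:
  assumes ok: "pairs_ok n P"
  shows "(\<Sum>x\<in>sign_vecs n s. (real (card (disc P x)))^2) =
     real (card P) * real (C2 n s 0 1) + real (card P) * (real (card P) - 1) * real (C4 n s 0 1 2 3)"
proof -
  have finP: "finite P" using po_fin[OF ok] .
  have "(\<Sum>x\<in>sign_vecs n s. (real (card (disc P x)))^2) =
        (\<Sum>x\<in>sign_vecs n s. \<Sum>p\<in>P. \<Sum>r\<in>P. I x (fst p) (snd p) * I x (fst r) (snd r))"
  proof (rule sum.cong[OF refl])
    fix x
    show "(real (card (disc P x)))^2 = (\<Sum>p\<in>P. \<Sum>r\<in>P. I x (fst p) (snd p) * I x (fst r) (snd r))"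
      unfolding d_sum[OF ok] power2_eq_square by (rule sum_product)
  qed
  also have "\<dots> = (\<Sum>p\<in>P. \<Sum>x\<in>sign_vecs n s. \<Sum>r\<in>P. I x (fst p) (snd p) * I x (fst r) (snd r))"
    by (rule sum.swap)
  also have "\<dots> = (\<Sum>p\<in>P. \<Sum>r\<in>P. \<Sum>x\<in>sign_vecs n s. I x (fst p) (snd p) * I x (fst r) (snd r))"
    by (rule sum.cong[OF refl], rule sum.swap)
  also have "\<dots> = (\<Sum>p\<in>P. real (C2 n s 0 1) + (real (card P) - 1) * real (C4 n s 0 1 2 3))"
  proof (rule sum.cong[OF refl])
    fix p assume p: "p \<in> P"
    have "(\<Sum>r\<in>P. \<Sum>x\<in>sign_vecs n s. I x (fst p) (snd p) * I x (fst r) (snd r))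
        = (\<Sum>x\<in>sign_vecs n s. I x (fst p) (snd p) * I x (fst p) (snd p))
          + (\<Sum>r\<in>P-{p}. \<Sum>x\<in>sign_vecs n s. I x (fst p) (snd p) * I x (fst r) (snd r))"
      using sum.remove[OF finP p] by simp
    also have "(\<Sum>x\<in>sign_vecs n s. I x (fst p) (snd p) * I x (fst p) (snd p)) = real (C2 n s 0 1)"
    proof -
      have "(\<Sum>x\<in>sign_vecs n s. I x (fst p) (snd p) * I x (fst p) (snd p)) = (\<Sum>x\<in>sign_vecs n s. I x (fst p) (snd p))"
        by (rule sum.cong[OF refl]) simp
      also have "\<dots> = real (C2 n s (fst p) (snd p))" unfolding C2_def by (rule sum_bool[OF sv_finite])
      also have "C2 n s (fst p) (snd p) = C2 n s 0 1"
        by (rule C2_norm) (use po_lt1[OF ok p] po_lt2[OF ok p] po_ne[OF ok p] in auto)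
      finally show ?thesis .
    qed
    also have "(\<Sum>r\<in>P-{p}. \<Sum>x\<in>sign_vecs n s. I x (fst p) (snd p) * I x (fst r) (snd r)) = (\<Sum>r\<in>P-{p}. real (C4 n s 0 1 2 3))"
    proof (rule sum.cong[OF refl])
      fix r assume r: "r \<in> P - {p}"
      then have rP: "r \<in> P" and ne: "r \<noteq> p" by auto
      have "(\<Sum>x\<in>sign_vecs n s. I x (fst p) (snd p) * I x (fst r) (snd r))
          = (\<Sum>x\<in>sign_vecs n s. of_bool (x (fst p) \<noteq> x (snd p) \<and> x (fst r) \<noteq> x (snd r)))"
        by (rule sum.cong[OF refl]) simp
      also have "\<dots> = real (C4 n s (fst p) (snd p) (fst r) (snd r))" unfolding C4_def by (rule sum_bool[OF sv_finite])
      also have "C4 n s (fst p) (snd p) (fst r) (snd r) = C4 n s 0 1 2 3"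
      proof (rule C4_norm)
        show "fst p < n" "snd p < n" "fst r < n" "snd r < n" using po_lt1[OF ok] po_lt2[OF ok] p rP by auto
        have a: "fst p \<noteq> snd p" "fst r \<noteq> snd r" using po_ne[OF ok] p rP by auto
        have b: "fst p \<noteq> fst r" using po_ff[OF ok p rP] ne by auto
        have c: "snd p \<noteq> snd r" using po_ss[OF ok p rP] ne by auto
        have d: "fst p \<noteq> snd r" "fst r \<noteq> snd p" using po_fs[OF ok p rP] po_fs[OF ok rP p] by auto
        show "distinct [fst p, snd p, fst r, snd r]" using a b c d by auto
      qed
      finally show "(\<Sum>x\<in>sign_vecs n s. I x (fst p) (snd p) * I x (fst r) (snd r)) = real (C4 n s 0 1 2 3)" .
    qed
    also have "\<dots> = (real (card P) - 1) * real (C4 n s 0 1 2 3)"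
      using card_rm[OF finP p] by simp
    finally show "(\<Sum>r\<in>P. \<Sum>x\<in>sign_vecs n s. I x (fst p) (snd p) * I x (fst r) (snd r))
        = real (C2 n s 0 1) + (real (card P) - 1) * real (C4 n s 0 1 2 3)" .
  qed
  also have "\<dots> = real (card P) * real (C2 n s 0 1) + real (card P) * (real (card P) - 1) * real (C4 n s 0 1 2 3)"
    by (simp add: algebra_simps)
  finally show ?thesis .
qed

lemma poly4: "(n::real) \<ge> 4 \<Longrightarrow> n^3 * (4*n - 6) \<le> 64 * (n-1)^2 * (n-2) * (n-3)"
proof -
  assume n: "n \<ge> 4"
  define m where "m = n - 4"
  have m0: "m \<ge> 0" using n m_def by simp
  have e: "64 * (n-1)^2 * (n-2) * (n-3) - n^3 * (4*n - 6) = 512 + 1760*m + 1544*m^2 + 518*m^3 + 60*m^4"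
    unfolding m_def by algebra
  have "0 \<le> 512 + 1760*m + 1544*m^2 + 518*m^3 + 60*m^4" using m0 by simp
  then show ?thesis using e by linarith
qed

lemma var_bound:
  fixes N n q X Y C2 C4 :: real
  assumes N: "N > 0" and n: "n \<ge> 4" and q: "q \<ge> 0" "2 * q \<le> n" and X: "0 \<le> X" "4 * X \<le> n^2"
    and Y: "Y \<le> X" and C4: "C4 \<ge> 0"
    and h2: "n * (n - 1) * C2 = 2 * X * N" and h4: "n * (n - 1) * (n - 2) * (n - 3) * C4 = 4 * X * Y * N"
  shows "q * (q - 1) * C4 - q^2 * C2^2 / N \<le> 8 * q * N"
proof -
  define D2 where "D2 = n * (n - 1)"
  define D4 where "D4 = n * (n - 1) * (n - 2) * (n - 3)"
  have D2p: "D2 > 0" unfolding D2_def using n by simp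
  have D4p: "D4 > 0" unfolding D4_def using n by simp
  have h2': "C2 * D2 = 2 * X * N" using h2 unfolding D2_def by (simp add: mult.commute)
  have c2: "C2 = 2 * X * N / D2" using h2' D2p by (simp add: eq_divide_eq)
  have c4: "C4 \<le> 4 * X^2 * N / D4"
  proof -
    have "C4 = 4 * X * Y * N / D4" using h4 D4p unfolding D4_def by (simp add: field_simps)
    also have "\<dots> \<le> 4 * X * X * N / D4"
      using X Y N D4p by (intro divide_right_mono mult_right_mono mult_left_mono) auto
    finally show ?thesis by (simp add: power2_eq_square)
  qed
  have sq: "C2^2 / N = 4 * X^2 * N / D2^2" unfolding c2 using N by (simp add: power2_eq_square field_simps)
  have z: "1 / D4 - 1 / D2^2 = (4*n - 6) / (D4 * D2)"
  proof -
    have e: "D2^2 - D4 = D2 * (4*n - 6)" unfolding D2_def D4_def by algebra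
    have "1 / D4 - 1 / D2^2 = (D2^2 - D4) / (D4 * D2^2)" using D2p D4p by (simp add: field_simps)
    also have "\<dots> = D2 * (4*n - 6) / (D4 * D2^2)" unfolding e ..
    also have "\<dots> = (4*n - 6) / (D4 * D2)" using D2p by (simp add: power2_eq_square)
    finally show ?thesis .
  qed
  have zpos: "(4*n - 6) / (D4 * D2) \<ge> 0" using n D2p D4p by simp
  have "q * (q - 1) * C4 - q^2 * C2^2 / N \<le> q^2 * C4 - q^2 * C2^2 / N"
  proof -
    have "q * (q - 1) * C4 \<le> q^2 * C4" using q C4 by (simp add: power2_eq_square algebra_simps)
    then show ?thesis by linarith
  qed
  also have "\<dots> = q^2 * (C4 - C2^2 / N)" by (simp add: algebra_simps)
  also have "\<dots> \<le> q^2 * (4 * X^2 * N / D4 - 4 * X^2 * N / D2^2)"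
    using c4 unfolding sq by (intro mult_left_mono) auto
  also have "4 * X^2 * N / D4 - 4 * X^2 * N / D2^2 = (4 * X^2 * N) * (1 / D4 - 1 / D2^2)" by (simp add: algebra_simps)
  also have "\<dots> = (4 * X^2 * N) * ((4*n - 6) / (D4 * D2))" unfolding z ..
  also have "q^2 * ((4 * X^2 * N) * ((4*n - 6) / (D4 * D2))) \<le> (q * (n/2)) * ((4 * (n^2/4)^2 * N) * ((4*n - 6) / (D4 * D2)))"
  proof (rule mult_mono)
    show "q^2 \<le> q * (n/2)" using mult_left_mono[OF q(2) q(1)] by (simp add: power2_eq_square algebra_simps)
    have "X^2 \<le> (n^2/4)^2" using X by (intro power_mono) auto
    then show "(4 * X^2 * N) * ((4*n - 6) / (D4 * D2)) \<le> (4 * (n^2/4)^2 * N) * ((4*n - 6) / (D4 * D2))"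
      using N zpos by (intro mult_right_mono) auto
    show "0 \<le> q * (n / 2)" using q n by simp
    show "0 \<le> 4 * X\<^sup>2 * N * ((4 * n - 6) / (D4 * D2))" using N zpos by (intro mult_nonneg_nonneg) auto
  qed
  also have "\<dots> = q * N * (n^5 * (4*n - 6) / (8 * D4 * D2))"
    by (simp add: field_simps eval_nat_numeral)
  also have "\<dots> \<le> q * N * 8"
  proof (rule mult_left_mono)
    have "n^5 * (4*n - 6) = n^2 * (n^3 * (4*n - 6))" by (simp add: power_def)
    also have "\<dots> \<le> n^2 * (64 * (n-1)^2 * (n-2) * (n-3))" using poly4[OF n] by (intro mult_left_mono) auto
    also have "\<dots> = 64 * (D4 * D2)" unfolding D2_def D4_def by (simp add: power2_eq_square algebra_simps)
    finally have "n^5 * (4*n - 6) \<le> 64 * (D4 * D2)" .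
    then show "n^5 * (4*n - 6) / (8 * D4 * D2) \<le> 8" using D2p D4p by (simp add: divide_le_eq algebra_simps)
    show "0 \<le> q * N" using q N by simp
  qed
  finally show ?thesis by (simp add: algebra_simps)
qed

lemma pairs_card: "pairs_ok n P \<Longrightarrow> 2 * card P \<le> n"
proof -
  assume ok: "pairs_ok n P"
  have "real (card (ppos P)) = (\<Sum>k\<in>ppos P. 1)" by simp
  also have "\<dots> = (\<Sum>p\<in>P. 1 + 1)" by (rule sum_pairs[OF ok subset_refl])
  also have "\<dots> = 2 * real (card P)" by simp
  finally have "card (ppos P) = 2 * card P" by linarith
  moreover have "card (ppos P) \<le> n" using card_mono[OF _ ppos_lt[OF ok subset_refl]] by simp
  ultimately show ?thesis by simp
qed

lemma Bf_bound: "real d \<ge> r \<Longrightarrow> r > 0 \<Longrightarrow> Bf d \<le> 1 / sqrt r"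
proof -
  assume d: "real d \<ge> r" and r: "r > 0"
  have "(Bf d)^2 * (real d + 1) \<le> 1" using Bf_sq[of d] by (simp add: add.commute)
  then have "(Bf d)^2 * r \<le> 1" using d r Bf_nonneg[of d]
    by (smt (verit, best) mult_left_mono zero_le_power2)
  then have "(Bf d)^2 \<le> 1 / r" using r by (simp add: field_simps)
  then have "sqrt ((Bf d)^2) \<le> sqrt (1 / r)" by (rule real_sqrt_le_mono)
  then show ?thesis using Bf_nonneg[of d] by (simp add: real_sqrt_divide)
qed

lemma oneD:
  assumes ok: "pairs_ok n P" and P1: "card P \<ge> 1"
    and wpos: "\<forall>p\<in>P. w (fst p) - w (snd p) > \<beta>" and b0: "\<beta> \<ge> 0"
    and e: "0 < \<epsilon>" "\<epsilon> \<le> 1" and hs: "\<bar>real_of_int s\<bar> \<le> (1 - \<epsilon>) * real n"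
  shows "real (card {y\<in>sign_vecs n s. \<bar>Ssum n w y - t\<bar> \<le> \<beta>})
           \<le> (144 / \<epsilon>^4 + 2 / \<epsilon>) / sqrt (real (card P)) * real (card (sign_vecs n s))"
proof -
  define \<Omega> where "\<Omega> = sign_vecs n s"
  have fin: "finite \<Omega>" unfolding \<Omega>_def by (rule sv_finite)
  define N where "N = real (card \<Omega>)"
  define q where "q = real (card P)"
  define d where "d x = real (card (disc P x))" for x
  have q1: "q \<ge> 1" unfolding q_def using P1 by simp
  have qn: "2 * q \<le> real n" unfolding q_def using pairs_card[OF ok] by (metis of_nat_le_iff of_nat_mult of_nat_numeral)
  have Kpos: "0 \<le> (144 / \<epsilon>^4 + 2 / \<epsilon>)" using e by simp
  have G: "real (card {y\<in>\<Omega>. \<bar>Ssum n w y - t\<bar> \<le> \<beta>}) \<le> (\<Sum>y\<in>\<Omega>. Bf (card (disc P y)))"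
    unfolding \<Omega>_def by (rule good_le_sumB[OF ok wpos b0])
  show ?thesis
  proof (cases "\<Omega> = {}")
    case True
    then show ?thesis using G unfolding \<Omega>_def by simp
  next
    case False
    then have Np: "N > 0" unfolding N_def using fin by (simp add: card_gt_0_iff)
    have n2: "real n \<ge> 2" using q1 qn by linarith
    define A where "A = (real n + real_of_int s) / 2"
    define Bb where "Bb = (real n - real_of_int s) / 2"
    have A0: "A \<ge> \<epsilon> * real n / 2" unfolding A_def using hs by (auto simp: abs_le_iff algebra_simps)
    have B0: "Bb \<ge> \<epsilon> * real n / 2" unfolding Bb_def using hs by (auto simp: abs_le_iff algebra_simps)
    have en0: "\<epsilon> * real n / 2 > 0" using e n2 by simp
    define X where "X = A * Bb"
    define Y where "Y = (A - 1) * (Bb - 1)"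
    have AB: "A + Bb = real n" unfolding A_def Bb_def by (simp add: field_simps)
    have X0: "X \<ge> 0" unfolding X_def using A0 B0 en0 by simp
    have Xle: "4 * X \<le> (real n)^2"
    proof -
      have "(A - Bb)^2 \<ge> 0" by simp
      then show ?thesis unfolding X_def AB[symmetric] by (simp add: power2_eq_square algebra_simps)
    qed
    have YX: "Y \<le> X" unfolding Y_def X_def using AB n2 by (simp add: algebra_simps)
    have Xlow: "X \<ge> (\<epsilon> * real n / 2)^2" unfolding X_def power2_eq_square
      using A0 B0 en0 by (intro mult_mono) auto
    define C2r where "C2r = real (C2 n s 0 1)"
    define C4r where "C4r = real (C4 n s 0 1 2 3)"
    have m1: "real n * (real n - 1) * C2r = N * (2 * A * Bb)"
      using M1[of n s] unfolding C2r_def N_def \<Omega>_def A_def Bb_def .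
    have eqX: "N * (2 * A * Bb) = 2 * X * N" unfolding X_def by (simp add: ac_simps)
    have h2: "real n * (real n - 1) * C2r = 2 * X * N" using m1 unfolding eqX .
    have m2: "real n * (real n - 1) * (real n - 2) * (real n - 3) * C4r = N * ((2 * A * Bb) * (2 * (A - 1) * (Bb - 1)))"
      using M2[of n s] unfolding C4r_def N_def \<Omega>_def A_def Bb_def .
    have eqY: "N * ((2 * A * Bb) * (2 * (A - 1) * (Bb - 1))) = 4 * X * Y * N" unfolding X_def Y_def by (simp add: algebra_simps)
    have h4: "real n * (real n - 1) * (real n - 2) * (real n - 3) * C4r = 4 * X * Y * N" using m2 unfolding eqY .
    have C2N: "C2r \<le> N" unfolding C2r_def N_def C2_def \<Omega>_def by (simp add: card_mono[OF sv_finite])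
    have C40: "C4r \<ge> 0" unfolding C4r_def by simp
    have E1': "(\<Sum>x\<in>\<Omega>. d x) = q * C2r" unfolding d_def \<Omega>_def q_def C2r_def by (rule E1[OF ok])
    have E2': "(\<Sum>x\<in>\<Omega>. (d x)^2) = q * C2r + q * (q - 1) * C4r" unfolding d_def \<Omega>_def q_def C2r_def C4r_def by (rule E2[OF ok])
    define \<mu> where "\<mu> = q * C2r / N"
    have var: "(\<Sum>x\<in>\<Omega>. (d x - \<mu>)^2) = q * C2r + q * (q - 1) * C4r - q^2 * C2r^2 / N"
    proof -
      have "(\<Sum>x\<in>\<Omega>. (d x - \<mu>)^2) = (\<Sum>x\<in>\<Omega>. (d x)^2 - 2 * \<mu> * d x + \<mu>^2)"
        by (rule sum.cong[OF refl]) (simp add: power2_eq_square algebra_simps)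
      also have "\<dots> = (\<Sum>x\<in>\<Omega>. (d x)^2) - (\<Sum>x\<in>\<Omega>. 2 * \<mu> * d x) + (\<Sum>x\<in>\<Omega>. \<mu>^2)"
        by (simp add: sum.distrib sum_subtractf)
      also have "\<dots> = (\<Sum>x\<in>\<Omega>. (d x)^2) - 2 * \<mu> * (\<Sum>x\<in>\<Omega>. d x) + \<mu>^2 * N"
        unfolding N_def by (simp add: sum_distrib_left)
      also have "\<dots> = q * C2r + q * (q - 1) * C4r - q^2 * C2r^2 / N"
        unfolding E1' E2' \<mu>_def using Np by (simp add: power2_eq_square field_simps)
      finally show ?thesis .
    qed
    have cross: "q * (q - 1) * C4r - q^2 * C2r^2 / N \<le> 8 * q * N"
    proof (cases "q \<ge> 2")
      case True
      have n4: "real n \<ge> 4" using True qn by linarith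
      show ?thesis by (rule var_bound[OF Np n4 _ qn X0 Xle YX C40 h2 h4]) (use q1 in simp)
    next
      case False
      then have "q = 1"
      proof -
        have "card P < 2" using False unfolding q_def by simp
        then show ?thesis using P1 unfolding q_def by simp
      qed
      then have z1: "q * (q - 1) * C4r = 0" by simp
      have z2: "q^2 * C2r^2 / N \<ge> 0" using Np by simp
      have z3: "8 * q * N \<ge> 0" using Np q1 by simp
      show ?thesis using z1 z2 z3 by linarith
    qed
    have V: "(\<Sum>x\<in>\<Omega>. (d x - \<mu>)^2) \<le> 9 * q * N"
    proof -
      have "q * C2r \<le> q * N" using C2N q1 by simp
      then show ?thesis unfolding var using cross by linarith
    qed
    have mu_low: "\<mu> \<ge> q * \<epsilon>^2 / 2"
    proof -
      have D2: "real n * (real n - 1) > 0" using n2 by simp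
      have c2e: "C2r / N = 2 * X / (real n * (real n - 1))"
      proof (subst frac_eq_eq)
        show "N \<noteq> 0" using Np by simp
        show "real n * (real n - 1) \<noteq> 0" using D2 by linarith
        show "C2r * (real n * (real n - 1)) = 2 * X * N" using h2 by (simp add: ac_simps)
      qed
      have "\<mu> = q * (2 * X / (real n * (real n - 1)))"
        unfolding \<mu>_def c2e[symmetric] by simp
      also have "2 * X / (real n * (real n - 1)) \<ge> 2 * X / (real n)^2"
        using X0 D2 n2 by (intro divide_left_mono) (auto simp: power2_eq_square)
      then have "q * (2 * X / (real n * (real n - 1))) \<ge> q * (2 * X / (real n)^2)" using q1 by (intro mult_left_mono) auto
      finally have m1: "\<mu> \<ge> q * (2 * X / (real n)^2)" .
      have "2 * X / (real n)^2 \<ge> 2 * (\<epsilon> * real n / 2)^2 / (real n)^2"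
        using Xlow n2 by (intro divide_right_mono) auto
      also have "2 * (\<epsilon> * real n / 2)^2 / (real n)^2 = \<epsilon>^2 / 2" using n2 by (simp add: power2_eq_square field_simps)
      finally have "2 * X / (real n)^2 \<ge> \<epsilon>^2 / 2" .
      then have "q * (2 * X / (real n)^2) \<ge> q * (\<epsilon>^2 / 2)" using q1 by (intro mult_left_mono) auto
      then show ?thesis using m1 by simp
    qed
    have mup: "\<mu> > 0" using mu_low q1 e by (smt (verit) mult_pos_pos zero_less_power divide_pos_pos)
    define L where "L = {x\<in>\<Omega>. d x < \<mu> / 2}"
    have finL: "finite L" unfolding L_def using fin by simp
    have cheb: "real (card L) * (\<mu> / 2)^2 \<le> 9 * q * N"
    proof -
      have "real (card L) * (\<mu> / 2)^2 = (\<Sum>x\<in>L. (\<mu> / 2)^2)" by simp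
      also have "\<dots> \<le> (\<Sum>x\<in>L. (d x - \<mu>)^2)"
      proof (rule sum_mono)
        fix x assume "x \<in> L"
        then have "d x < \<mu> / 2" unfolding L_def by simp
        moreover have "d x \<ge> 0" unfolding d_def by simp
        ultimately have "\<mu> / 2 \<le> \<bar>d x - \<mu>\<bar>" by simp
        then have "(\<mu> / 2)^2 \<le> (\<bar>d x - \<mu>\<bar>)^2" using mup by (intro power_mono) auto
        then show "(\<mu> / 2)^2 \<le> (d x - \<mu>)^2" by simp
      qed
      also have "\<dots> \<le> (\<Sum>x\<in>\<Omega>. (d x - \<mu>)^2)"
        by (rule sum_mono2[OF fin]) (auto simp: L_def)
      finally show ?thesis using V by linarith
    qed
    have cardL: "real (card L) \<le> 144 / (q * \<epsilon>^4) * N"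
    proof -
      have "(q * \<epsilon>^2 / 4)^2 \<le> (\<mu> / 2)^2" using mu_low q1 e by (intro power_mono) auto
      then have "real (card L) * (q * \<epsilon>^2 / 4)^2 \<le> real (card L) * (\<mu> / 2)^2" by (intro mult_left_mono) auto
      then have "real (card L) * (q * \<epsilon>^2 / 4)^2 \<le> 9 * q * N" using cheb by linarith
      then have "real (card L) * (q^2 * \<epsilon>^4 / 16) \<le> 9 * q * N" by (simp add: power2_eq_square power4_eq_xxxx field_simps)
      moreover have "q^2 * \<epsilon>^4 / 16 > 0" using q1 e by simp
      ultimately have "real (card L) \<le> 9 * q * N / (q^2 * \<epsilon>^4 / 16)" by (simp add: le_divide_eq)
      also have "\<dots> = 144 / (q * \<epsilon>^4) * N" using q1 e by (simp add: power2_eq_square field_simps)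
      finally show ?thesis .
    qed
    have hi: "Bf (card (disc P x)) \<le> 2 / (\<epsilon> * sqrt q)" if "x \<in> \<Omega> - L" for x
    proof -
      have "d x \<ge> \<mu> / 2" using that unfolding L_def by auto
      then have dl: "real (card (disc P x)) \<ge> q * \<epsilon>^2 / 4" using mu_low unfolding d_def by simp
      have "Bf (card (disc P x)) \<le> 1 / sqrt (q * \<epsilon>^2 / 4)" by (rule Bf_bound[OF dl]) (use q1 e in simp)
      also have "sqrt (q * \<epsilon>^2 / 4) = \<epsilon> * sqrt q / 2" using e q1 by (simp add: real_sqrt_mult real_sqrt_divide)
      finally show ?thesis by simp
    qed
    have "(\<Sum>y\<in>\<Omega>. Bf (card (disc P y))) = (\<Sum>y\<in>L. Bf (card (disc P y))) + (\<Sum>y\<in>\<Omega> - L. Bf (card (disc P y)))"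
    proof -
      have "L \<subseteq> \<Omega>" unfolding L_def by auto
      from sum.subset_diff[OF this fin, of "\<lambda>y. Bf (card (disc P y))"] show ?thesis by (simp add: add.commute)
    qed
    also have "\<dots> \<le> (\<Sum>y\<in>L. 1) + (\<Sum>y\<in>\<Omega> - L. 2 / (\<epsilon> * sqrt q))"
      by (intro add_mono sum_mono Bf_le1 hi)
    also have "\<dots> \<le> real (card L) + N * (2 / (\<epsilon> * sqrt q))"
    proof -
      have "real (card (\<Omega> - L)) \<le> N" unfolding N_def using fin by (simp add: card_mono)
      moreover have "2 / (\<epsilon> * sqrt q) \<ge> 0" using e q1 by simp
      ultimately have "real (card (\<Omega> - L)) * (2 / (\<epsilon> * sqrt q)) \<le> N * (2 / (\<epsilon> * sqrt q))" by (rule mult_right_mono)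
      then show ?thesis by simp
    qed
    also have "\<dots> \<le> 144 / (q * \<epsilon>^4) * N + N * (2 / (\<epsilon> * sqrt q))" using cardL by simp
    also have "\<dots> \<le> (144 / \<epsilon>^4 + 2 / \<epsilon>) / sqrt q * N"
    proof -
      have sq: "sqrt q \<le> q" using q1 by (smt (verit) real_sqrt_le_iff real_sqrt_mult_self real_sqrt_le_mono one_le_power power2_eq_square mult_le_cancel_left2 real_sqrt_ge_one)
      have sqp: "sqrt q > 0" using q1 by simp
      have "144 / (q * \<epsilon>^4) \<le> 144 / (sqrt q * \<epsilon>^4)"
        using sq sqp e by (intro divide_left_mono mult_right_mono) auto
      then have "144 / (q * \<epsilon>^4) * N \<le> 144 / (sqrt q * \<epsilon>^4) * N" using Np by (intro mult_right_mono) auto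
      moreover have "144 / (sqrt q * \<epsilon>^4) * N + N * (2 / (\<epsilon> * sqrt q)) = (144 / \<epsilon>^4 + 2 / \<epsilon>) / sqrt q * N"
        using sqp e by (simp add: field_simps)
      ultimately show ?thesis by linarith
    qed
    finally have "(\<Sum>y\<in>\<Omega>. Bf (card (disc P y))) \<le> (144 / \<epsilon>^4 + 2 / \<epsilon>) / sqrt q * N" .
    then show ?thesis using G unfolding \<Omega>_def q_def N_def by linarith
  qed
qed

definition pairs_okS :: "nat set \<Rightarrow> (nat \<times> nat) set \<Rightarrow> bool" where
  "pairs_okS S P \<longleftrightarrow> finite P \<and> (\<forall>p\<in>P. fst p \<in> S \<and> snd p \<in> S \<and> fst p \<noteq> snd p) \<and>
     (\<forall>p\<in>P. \<forall>p'\<in>P. p \<noteq> p' \<longrightarrow> fst p \<noteq> fst p' \<and> fst p \<noteq> snd p' \<and> snd p \<noteq> snd p')"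

lemma pairs_okS_ok: "pairs_okS {..<n} P \<Longrightarrow> pairs_ok n P"
  unfolding pairs_okS_def pairs_ok_def by auto

lemma greedy:
  fixes v :: "nat \<Rightarrow> real^2" and R :: real
  assumes "finite S" "R \<ge> 0"
  shows "\<exists>P. pairs_okS S P \<and> (\<forall>p\<in>P. dist (v (fst p)) (v (snd p)) > R) \<and>
            (\<forall>i\<in>S - ppos P. \<forall>j\<in>S - ppos P. dist (v i) (v j) \<le> R)"
  using assms(1)
proof (induction S rule: finite_psubset_induct)
  case (psubset S)
  show ?case
  proof (cases "\<forall>i\<in>S. \<forall>j\<in>S. dist (v i) (v j) \<le> R")
    case True
    have "pairs_okS S {}" unfolding pairs_okS_def by simp
    then show ?thesis using True by (intro exI[of _ "{}"]) (simp add: ppos_def)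
  next
    case False
    then obtain i j where ij: "i \<in> S" "j \<in> S" "dist (v i) (v j) > R" by (meson not_le)
    have ne: "i \<noteq> j" using ij assms(2) by auto
    define S' where "S' = S - {i, j}"
    have sub: "S' \<subset> S" unfolding S'_def using ij by auto
    obtain P' where P': "pairs_okS S' P'" "\<forall>p\<in>P'. dist (v (fst p)) (v (snd p)) > R"
       "\<forall>i\<in>S' - ppos P'. \<forall>j\<in>S' - ppos P'. dist (v i) (v j) \<le> R"
      using psubset.IH[OF sub] by blast
    define P where "P = insert (i, j) P'"
    have mem': "fst p \<in> S'" "snd p \<in> S'" "fst p \<noteq> snd p" if "p \<in> P'" for p
      using P'(1) that unfolding pairs_okS_def by auto
    have ok: "pairs_okS S P"
      unfolding pairs_okS_def
    proof (intro conjI)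
      show "finite P" using P'(1) unfolding pairs_okS_def P_def by auto
      show "\<forall>p\<in>P. fst p \<in> S \<and> snd p \<in> S \<and> fst p \<noteq> snd p"
        unfolding P_def using ij ne mem' sub by auto
      show "\<forall>p\<in>P. \<forall>p'\<in>P. p \<noteq> p' \<longrightarrow> fst p \<noteq> fst p' \<and> fst p \<noteq> snd p' \<and> snd p \<noteq> snd p'"
      proof (intro ballI impI)
        fix p p' assume p: "p \<in> P" and p': "p' \<in> P" and pp: "p \<noteq> p'"
        show "fst p \<noteq> fst p' \<and> fst p \<noteq> snd p' \<and> snd p \<noteq> snd p'"
        proof (cases "p = (i, j)")
          case True
          then have "p' \<in> P'" using p' pp unfolding P_def by auto
          then show ?thesis using True mem'[of p'] unfolding S'_def by auto
        next
          case False
          then have pP': "p \<in> P'" using p unfolding P_def by auto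
          show ?thesis
          proof (cases "p' = (i, j)")
            case True
            then show ?thesis using pP' mem'[of p] unfolding S'_def by auto
          next
            case False
            then have "p' \<in> P'" using p' unfolding P_def by auto
            then show ?thesis using pP' pp P'(1) unfolding pairs_okS_def by blast
          qed
        qed
      qed
    qed
    have d: "\<forall>p\<in>P. dist (v (fst p)) (v (snd p)) > R" unfolding P_def using ij P'(2) by auto
    have e: "S - ppos P = S' - ppos P'" unfolding P_def S'_def ppos_def by auto
    show ?thesis using ok d P'(3) unfolding e[symmetric] by blast
  qed
qed

definition orient :: "(nat \<Rightarrow> real) \<Rightarrow> nat \<times> nat \<Rightarrow> nat \<times> nat" where
  "orient w p = (if w (snd p) \<le> w (fst p) then p else (snd p, fst p))"

lemma orient_props:
  assumes ok: "pairs_ok n P"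
  shows "pairs_ok n (orient w ` P)" and "card (orient w ` P) = card P"
    and "\<forall>p\<in>orient w ` P. w (fst p) - w (snd p) = \<bar>w (fst p) - w (snd p)\<bar>"
    and "\<forall>p\<in>orient w ` P. \<exists>p0\<in>P. \<bar>w (fst p) - w (snd p)\<bar> = \<bar>w (fst p0) - w (snd p0)\<bar>"
proof -
  have os: "{fst (orient w p), snd (orient w p)} = {fst p, snd p}" for p
    unfolding orient_def by auto
  have inj: "inj_on (orient w) P"
  proof (rule inj_onI)
    fix p p' assume p: "p \<in> P" and p': "p' \<in> P" and eq: "orient w p = orient w p'"
    show "p = p'"
    proof (rule ccontr)
      assume ne: "p \<noteq> p'"
      have "{fst p, snd p} = {fst p', snd p'}" using os[of p] os[of p'] eq by simp
      then have "fst p = fst p' \<or> fst p = snd p'" by auto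
      then show False using po_ff[OF ok p p'] po_fs[OF ok p p'] ne by auto
    qed
  qed
  show "card (orient w ` P) = card P" by (rule card_image[OF inj])
  show "pairs_ok n (orient w ` P)"
    unfolding pairs_ok_def
  proof (intro conjI)
    show "finite (orient w ` P)" using po_fin[OF ok] by simp
    show "\<forall>p\<in>orient w ` P. fst p < n \<and> snd p < n \<and> fst p \<noteq> snd p"
      using po_lt1[OF ok] po_lt2[OF ok] po_ne[OF ok] unfolding orient_def by auto
    show "\<forall>p\<in>orient w ` P. \<forall>p'\<in>orient w ` P. p \<noteq> p' \<longrightarrow> fst p \<noteq> fst p' \<and> fst p \<noteq> snd p' \<and> snd p \<noteq> snd p'"
    proof (intro ballI impI)
      fix a b assume a: "a \<in> orient w ` P" and b: "b \<in> orient w ` P" and ab: "a \<noteq> b"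
      obtain p where p: "p \<in> P" "a = orient w p" using a by auto
      obtain p' where p': "p' \<in> P" "b = orient w p'" using b by auto
      have ne: "p \<noteq> p'" using ab p p' by auto
      have dj: "{fst p, snd p} \<inter> {fst p', snd p'} = {}"
        using po_ff[OF ok p(1) p'(1)] po_ss[OF ok p(1) p'(1)] po_fs[OF ok p(1) p'(1)] po_fs[OF ok p'(1) p(1)] ne by auto
      have "{fst a, snd a} \<inter> {fst b, snd b} = {}" using dj os[of p] os[of p'] p p' by simp
      then show "fst a \<noteq> fst b \<and> fst a \<noteq> snd b \<and> snd a \<noteq> snd b" by auto
    qed
  qed
  show "\<forall>p\<in>orient w ` P. w (fst p) - w (snd p) = \<bar>w (fst p) - w (snd p)\<bar>"
    unfolding orient_def by auto
  show "\<forall>p\<in>orient w ` P. \<exists>p0\<in>P. \<bar>w (fst p) - w (snd p)\<bar> = \<bar>w (fst p0) - w (snd p0)\<bar>"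
  proof
    fix a assume "a \<in> orient w ` P"
    then obtain p where p: "p \<in> P" "a = orient w p" by auto
    have "\<bar>w (fst a) - w (snd a)\<bar> = \<bar>w (fst p) - w (snd p)\<bar>"
      unfolding p(2) orient_def by (simp add: abs_minus_commute)
    then show "\<exists>p0\<in>P. \<bar>w (fst a) - w (snd a)\<bar> = \<bar>w (fst p0) - w (snd p0)\<bar>" using p(1) by blast
  qed
qed

lemma pairs_ok_subset:
  assumes ok: "pairs_ok n P" and QP: "Q \<subseteq> P" shows "pairs_ok n Q"
  unfolding pairs_ok_def
proof (intro conjI ballI impI)
  show "finite Q" using finite_subset[OF QP po_fin[OF ok]] .
next
  fix p assume "p \<in> Q"
  then have p: "p \<in> P" using QP by blast
  show "fst p < n" using po_lt1[OF ok p] .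
  show "snd p < n" using po_lt2[OF ok p] .
  show "fst p \<noteq> snd p" using po_ne[OF ok p] .
next
  fix p p' assume "p \<in> Q" "p' \<in> Q" and ne: "p \<noteq> p'"
  then have p: "p \<in> P" and p': "p' \<in> P" using QP by blast+
  show "fst p \<noteq> fst p'" using po_ff[OF ok p p'] ne by blast
  show "fst p \<noteq> snd p'" using po_fs[OF ok p p'] by blast
  show "snd p \<noteq> snd p'" using po_ss[OF ok p p'] ne by blast
qed

lemma card_ppos: "pairs_ok n P \<Longrightarrow> card (ppos P) = 2 * card P"
proof -
  assume ok: "pairs_ok n P"
  have "real (card (ppos P)) = (\<Sum>k\<in>ppos P. 1)" by simp
  also have "\<dots> = (\<Sum>p\<in>P. 1 + 1)" by (rule sum_pairs[OF ok subset_refl])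
  also have "\<dots> = 2 * real (card P)" by simp
  finally show "card (ppos P) = 2 * card P" by linarith
qed

lemma Ssum_comp: "(\<Sum>i<n. of_int (x i) *\<^sub>R v i) $ c = Ssum n (\<lambda>i. v i $ c) x"
  unfolding Ssum_def by simp

lemma ball_bound:
  fixes v :: "nat \<Rightarrow> real^2"
  assumes ok: "pairs_ok n Q" and Q1: "card Q \<ge> 1"
    and big: "\<forall>p\<in>Q. \<bar>v (fst p) $ c - v (snd p) $ c\<bar> > \<beta>" and b0: "\<beta> \<ge> 0"
    and e: "0 < \<epsilon>" "\<epsilon> \<le> 1" and hs: "\<bar>real_of_int s\<bar> \<le> (1 - \<epsilon>) * real n"
  shows "small_ball_prob n v s \<beta> c0 \<le> (144 / \<epsilon>^4 + 2 / \<epsilon>) / sqrt (real (card Q))"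
proof -
  define w where "w i = v i $ c" for i
  define Q' where "Q' = orient w ` Q"
  have ok': "pairs_ok n Q'" unfolding Q'_def by (rule orient_props(1)[OF ok])
  have cQ: "card Q' = card Q" unfolding Q'_def by (rule orient_props(2)[OF ok])
  have wpos: "\<forall>p\<in>Q'. w (fst p) - w (snd p) > \<beta>"
  proof
    fix p assume p: "p \<in> Q'"
    then obtain p0 where p0: "p0 \<in> Q" "\<bar>w (fst p) - w (snd p)\<bar> = \<bar>w (fst p0) - w (snd p0)\<bar>"
      using orient_props(4)[OF ok] unfolding Q'_def by blast
    have "w (fst p) - w (snd p) = \<bar>w (fst p) - w (snd p)\<bar>" using orient_props(3)[OF ok] p unfolding Q'_def by blast
    then show "w (fst p) - w (snd p) > \<beta>" using p0 big unfolding w_def by auto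
  qed
  define K where "K = (144 / \<epsilon>^4 + 2 / \<epsilon>)"
  have K0: "K \<ge> 0" unfolding K_def using e by simp
  have one: "real (card {y\<in>sign_vecs n s. \<bar>Ssum n w y - c0 $ c\<bar> \<le> \<beta>})
           \<le> K / sqrt (real (card Q')) * real (card (sign_vecs n s))"
    unfolding K_def by (rule oneD[OF ok' _ wpos b0 e hs]) (use Q1 cQ in simp)
  have sub: "{x \<in> sign_vecs n s. (\<Sum>i<n. of_int (x i) *\<^sub>R v i) \<in> cball c0 \<beta>}
      \<subseteq> {y\<in>sign_vecs n s. \<bar>Ssum n w y - c0 $ c\<bar> \<le> \<beta>}"
  proof
    fix x assume "x \<in> {x \<in> sign_vecs n s. (\<Sum>i<n. of_int (x i) *\<^sub>R v i) \<in> cball c0 \<beta>}"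
    then have xs: "x \<in> sign_vecs n s" and xb: "(\<Sum>i<n. of_int (x i) *\<^sub>R v i) \<in> cball c0 \<beta>" by auto
    have "\<bar>Ssum n w x - c0 $ c\<bar> = \<bar>((\<Sum>i<n. of_int (x i) *\<^sub>R v i) - c0) $ c\<bar>"
      unfolding w_def Ssum_comp[symmetric] by simp
    also have "\<dots> \<le> norm ((\<Sum>i<n. of_int (x i) *\<^sub>R v i) - c0)" by (rule component_le_norm_cart)
    also have "\<dots> = dist c0 (\<Sum>i<n. of_int (x i) *\<^sub>R v i)" by (simp add: dist_norm norm_minus_commute)
    also have "\<dots> \<le> \<beta>" using xb by simp
    finally show "x \<in> {y\<in>sign_vecs n s. \<bar>Ssum n w y - c0 $ c\<bar> \<le> \<beta>}" using xs by simp
  qed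
  have cardle: "card {x \<in> sign_vecs n s. (\<Sum>i<n. of_int (x i) *\<^sub>R v i) \<in> cball c0 \<beta>}
      \<le> card {y\<in>sign_vecs n s. \<bar>Ssum n w y - c0 $ c\<bar> \<le> \<beta>}"
    by (rule card_mono[OF _ sub]) (simp add: sv_finite)
  show ?thesis
  proof (cases "card (sign_vecs n s) = 0")
    case True
    then show ?thesis unfolding small_ball_prob_def using K0 K_def by simp
  next
    case False
    then have Np: "real (card (sign_vecs n s)) > 0" by simp
    have "small_ball_prob n v s \<beta> c0 \<le> real (card {y\<in>sign_vecs n s. \<bar>Ssum n w y - c0 $ c\<bar> \<le> \<beta>}) / real (card (sign_vecs n s))"
      unfolding small_ball_prob_def using cardle Np by (intro divide_right_mono) auto
    also have "\<dots> \<le> K / sqrt (real (card Q'))" using one Np by (simp add: divide_le_eq)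
    finally show ?thesis unfolding K_def cQ .
  qed
qed

lemma class_final:
  fixes v :: "nat \<Rightarrow> real^2"
  assumes ok: "pairs_ok n Q" and Q4: "4 * real (card Q) > n'" and n'1: "n' > 1" and n'n: "n' < real n"
    and big: "\<forall>p\<in>Q. \<bar>v (fst p) $ c - v (snd p) $ c\<bar> > \<beta>" and b0: "\<beta> \<ge> 0"
    and e: "0 < \<epsilon>" "\<epsilon> \<le> 1" and hs: "\<bar>real_of_int s\<bar> \<le> (1 - \<epsilon>) * real n"
  shows "rho_star n v s \<beta> \<le> 2 * (144 / \<epsilon>^4 + 2 / \<epsilon>) * sqrt (real n) / n'"
proof -
  define K where "K = 144 / \<epsilon>^4 + 2 / \<epsilon>"
  have K0: "K \<ge> 0" unfolding K_def using e by simp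
  have Q1: "card Q \<ge> 1" using Q4 n'1 by (cases "card Q") auto
  have each: "small_ball_prob n v s \<beta> c0 \<le> K / sqrt (real (card Q))" for c0
    unfolding K_def by (rule ball_bound[OF ok Q1 big b0 e hs])
  have sqn': "sqrt n' > 0" using n'1 by simp
  have "sqrt (n' / 4) \<le> sqrt (real (card Q))" using Q4 by (intro real_sqrt_le_mono) simp
  moreover have "sqrt (n' / 4) = sqrt n' / 2" by (simp add: real_sqrt_divide)
  ultimately have sQ: "sqrt n' / 2 \<le> sqrt (real (card Q))" by simp
  have "K / sqrt (real (card Q)) \<le> K / (sqrt n' / 2)"
  proof (rule divide_left_mono)
    show "sqrt n' / 2 \<le> sqrt (real (card Q))" by (rule sQ)
    show "0 \<le> K" by (rule K0)
    have "sqrt (real (card Q)) > 0" using Q1 by simp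
    then show "0 < sqrt (real (card Q)) * (sqrt n' / 2)" using sqn' by simp
  qed
  also have "\<dots> = 2 * K / sqrt n'" by simp
  also have "\<dots> \<le> 2 * K * sqrt (real n) / n'"
  proof -
    have "sqrt n' \<le> sqrt (real n)" using n'n by (intro real_sqrt_le_mono) simp
    then have "sqrt n' * sqrt n' \<le> sqrt n' * sqrt (real n)" using sqn' by (intro mult_left_mono) auto
    moreover have "sqrt n' * sqrt n' = n'" using n'1 by simp
    ultimately have "n' \<le> sqrt n' * sqrt (real n)" by simp
    then have "1 / sqrt n' \<le> sqrt (real n) / n'" using sqn' n'1 by (simp add: field_simps)
    then have "2 * K * (1 / sqrt n') \<le> 2 * K * (sqrt (real n) / n')" using K0 by (intro mult_left_mono) auto
    then show ?thesis by simp
  qed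
  finally have bnd: "\<And>c0. small_ball_prob n v s \<beta> c0 \<le> 2 * K * sqrt (real n) / n'" using each order_trans by blast
  have "rho_star n v s \<beta> \<le> 2 * K * sqrt (real n) / n'"
    unfolding rho_star_def by (rule cSUP_least) (use bnd in auto)
  then show ?thesis unfolding K_def .
qed

theorem corollary4p6:
  fixes \<epsilon> \<alpha> :: real
  assumes "0 < \<epsilon>" "\<epsilon> \<le> 1" "0 < \<alpha>" "\<alpha> < 1/2"
  shows "\<exists>C>0. \<forall>(n::nat) (s::int) (n'::real) (\<beta>::real) (v::nat \<Rightarrow> real^2).
           \<bar>real_of_int s\<bar> \<le> (1 - \<epsilon>) * real n \<longrightarrow>
           real n powr (1/2 + \<alpha>) < n' \<longrightarrow> n' < real n \<longrightarrow>
           0 < \<beta> \<longrightarrow> \<beta> \<le> real n powr (-24) \<longrightarrow>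
           (\<forall>q::real^2. real (card {i\<in>{..<n}. dist (v i) q \<le> \<beta> * real n ^ 6}) < real n - n') \<longrightarrow>
           rho_star n v s \<beta> \<le> C * sqrt (real n) / n'"
proof -
  define K where "K = 144 / \<epsilon>^4 + 2 / \<epsilon>"
  have Kp: "K > 0" unfolding K_def
  proof (rule add_pos_pos)
    show "0 < 144 / \<epsilon>^4" using assms(1) by simp
    show "0 < 2 / \<epsilon>" using assms(1) by simp
  qed
  show ?thesis
  proof (intro exI[of _ "2 * K"] conjI allI impI)
    show "0 < 2 * K" using Kp by simp
  next
    fix n :: nat and s :: int and n' \<beta> :: real and v :: "nat \<Rightarrow> real^2"
    assume hs: "\<bar>real_of_int s\<bar> \<le> (1 - \<epsilon>) * real n"
      and h1: "real n powr (1/2 + \<alpha>) < n'" and h2: "n' < real n" and bpos: "0 < \<beta>"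
      and hyp: "\<forall>q::real^2. real (card {i\<in>{..<n}. dist (v i) q \<le> \<beta> * real n ^ 6}) < real n - n'"
    have n2: "n \<ge> 2"
    proof (rule ccontr)
      assume "\<not> n \<ge> 2"
      then have "n = 0 \<or> n = 1" by auto
      then show False using h1 h2 by auto
    qed
    have "real n powr (1/2 + \<alpha>) \<ge> 1" using n2 assms(3) by (intro ge_one_powr_ge_zero) auto
    then have n'1: "n' > 1" using h1 by linarith
    define R where "R = \<beta> * real n ^ 6"
    have R0: "R \<ge> 0" unfolding R_def using bpos by simp
    have R64: "R \<ge> 64 * \<beta>"
    proof -
      have "(2::real)^6 \<le> real n ^ 6" using n2 by (intro power_mono) auto
      then show ?thesis unfolding R_def using bpos by simp
    qed
    obtain P where P: "pairs_okS {..<n} P" "\<forall>p\<in>P. dist (v (fst p)) (v (snd p)) > R"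
      "\<forall>i\<in>{..<n} - ppos P. \<forall>j\<in>{..<n} - ppos P. dist (v i) (v j) \<le> R"
      using greedy[of "{..<n}" R v] R0 by auto
    have ok: "pairs_ok n P" by (rule pairs_okS_ok[OF P(1)])
    define U where "U = {..<n} - ppos P"
    have cU: "real (card U) < real n - n'"
    proof (cases "U = {}")
      case True
      then show ?thesis using h2 by simp
    next
      case False
      then obtain u0 where u0: "u0 \<in> U" by auto
      have "U \<subseteq> {i\<in>{..<n}. dist (v i) (v u0) \<le> \<beta> * real n ^ 6}"
        using P(3) u0 unfolding U_def R_def by auto
      then have "card U \<le> card {i\<in>{..<n}. dist (v i) (v u0) \<le> \<beta> * real n ^ 6}" by (intro card_mono) auto
      then show ?thesis using hyp[rule_format, of "v u0"] by linarith
    qed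
    have "card U = n - card (ppos P)" unfolding U_def
      using card_Diff_subset[OF _ ppos_lt[OF ok subset_refl]] by (simp add: finite_subset[OF ppos_lt[OF ok subset_refl]])
    then have "card U = n - 2 * card P" using card_ppos[OF ok] by simp
    then have "real (card U) = real n - 2 * real (card P)" using pairs_card[OF ok] by (simp add: of_nat_diff)
    then have P2: "2 * real (card P) > n'" using cU by linarith
    define P1 where "P1 = {p\<in>P. \<bar>v (fst p) $ 2 - v (snd p) $ 2\<bar> \<le> \<bar>v (fst p) $ 1 - v (snd p) $ 1\<bar>}"
    define P2' where "P2' = P - P1"
    have finP: "finite P" using po_fin[OF ok] .
    have cP: "card P1 + card P2' = card P"
    proof -
      have "P1 \<subseteq> P" unfolding P1_def by auto
      then have "card P2' = card P - card P1" unfolding P2'_def by (simp add: card_Diff_subset finite_subset[OF _ finP])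
      moreover have "card P1 \<le> card P" using \<open>P1 \<subseteq> P\<close> finP by (simp add: card_mono)
      ultimately show ?thesis by simp
    qed
    have normle: "dist (v (fst p)) (v (snd p)) \<le> \<bar>v (fst p) $ 1 - v (snd p) $ 1\<bar> + \<bar>v (fst p) $ 2 - v (snd p) $ 2\<bar>" for p
    proof -
      have "dist (v (fst p)) (v (snd p)) = norm (v (fst p) - v (snd p))" by (simp add: dist_norm)
      also have "\<dots> \<le> (\<Sum>i\<in>UNIV. \<bar>(v (fst p) - v (snd p)) $ i\<bar>)" by (rule norm_le_l1_cart)
      also have "\<dots> = \<bar>v (fst p) $ 1 - v (snd p) $ 1\<bar> + \<bar>v (fst p) $ 2 - v (snd p) $ 2\<bar>" by (simp add: sum_2)
      finally show ?thesis .
    qed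
    have b0: "\<beta> \<ge> 0" using bpos by simp
    show "rho_star n v s \<beta> \<le> 2 * K * sqrt (real n) / n'"
    proof (cases "2 * card P1 \<ge> card P")
      case True
      have ok1: "pairs_ok n P1" by (rule pairs_ok_subset[OF ok]) (auto simp: P1_def)
      have Q4: "4 * real (card P1) > n'" using True P2 by linarith
      have big: "\<forall>p\<in>P1. \<bar>v (fst p) $ 1 - v (snd p) $ 1\<bar> > \<beta>"
      proof
        fix p assume p: "p \<in> P1"
        then have "dist (v (fst p)) (v (snd p)) > R" using P(2) unfolding P1_def by auto
        moreover have "\<bar>v (fst p) $ 2 - v (snd p) $ 2\<bar> \<le> \<bar>v (fst p) $ 1 - v (snd p) $ 1\<bar>" using p unfolding P1_def by auto
        ultimately show "\<bar>v (fst p) $ 1 - v (snd p) $ 1\<bar> > \<beta>" using normle[of p] R64 bpos by linarith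
      qed
      show ?thesis using class_final[OF ok1 Q4 n'1 h2 big b0 assms(1,2) hs] unfolding K_def .
    next
      case False
      then have T: "2 * card P2' \<ge> card P" using cP by linarith
      have ok2: "pairs_ok n P2'" by (rule pairs_ok_subset[OF ok]) (auto simp: P2'_def)
      have Q4: "4 * real (card P2') > n'" using T P2 by linarith
      have big: "\<forall>p\<in>P2'. \<bar>v (fst p) $ 2 - v (snd p) $ 2\<bar> > \<beta>"
      proof
        fix p assume p: "p \<in> P2'"
        then have "dist (v (fst p)) (v (snd p)) > R" using P(2) unfolding P2'_def by auto
        moreover have "\<bar>v (fst p) $ 1 - v (snd p) $ 1\<bar> < \<bar>v (fst p) $ 2 - v (snd p) $ 2\<bar>" using p unfolding P2'_def P1_def by auto
        ultimately show "\<bar>v (fst p) $ 2 - v (snd p) $ 2\<bar> > \<beta>" using normle[of p] R64 bpos by linarith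
      qed
      show ?thesis using class_final[OF ok2 Q4 n'1 h2 big b0 assms(1,2) hs] unfolding K_def .
    qed
  qed
qed

end
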